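(* Let $X, Y \subseteq \omega$. There exists an embedding $\mathcal{B}^X \hookrightarrow \mathcal{G}^Y$ if and only if $X \oplus \overline{X} \le_e Y$.
   Context: A pca is a set with a partial binary application operation containing distinct $\mathrm{s},\mathrm{k}$ with $\mathrm{k}ab\downarrow=a$, $\mathrm{s}ab\downarrow$, $\mathrm{s}abc\simeq(ac)(bc)$. An embedding of pcas is an injective map $f$ with: if $ab$ is defined then $f(a)f(b)$ is defined and equals $f(ab)$. $\mathcal{B}^X$: elements are the partial $X$-computable functions $\omega\rightharpoonup\omega$; application $\varphi\cdot\psi$ is the partial function $n\mapsto\Phi^{\varphi\oplus\psi}_{\varphi(0)}(n)$, where $\Phi_e$ is the $e$-th Turing functional, $(\varphi\oplus\psi)(2n)\simeq\varphi(n)$, $(\varphi\oplus\psi)(2n+1)\simeq\psi(n)$, and querying the oracle at an undefined point diverges. Scott's graph model: on $\mathcal{P}(\omega)$, $A\cdot B=\{n:\exists u\,(\langle n,u\rangle\in A\wedge D_u\subseteq B)\}$, with $\langle\cdot,\cdot\rangle$ a bijective computable pairing, $\langle 0,0\rangle=0$, and $D_u$ the finite set with canonical code $u$. $\mathcal{G}^Y$ is the least class containing $Y$ and all c.e. sets and closed under this application (equivalently, all sets $\le_e Y$). $A\le_e Y$ (enumeration reducibility) means there is a c.e. relation $R$ with $x\in A \iff \exists u\,(R(x,u)\wedge D_u\subseteq Y)$. $X\oplus\overline X=\{2n:n\in X\}\cup\{2n+1:n\notin X\}$. *)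

theory Defs
  imports Main "HOL-Library.Nat_Bijection"
begin

definition arg :: "nat \<Rightarrow> nat list \<Rightarrow> nat" where
  "arg i xs = (if i < length xs then xs ! i else 0)"

text \<open>Program codes e, with r = e mod 7 and d = e div 7:
  r=0 zero; r=1 successor of first argument; r=2 projection onto argument d;
  r=3 composition, (p, qs) = prod_decode d, qs = list_decode of second component;
  r=4 primitive recursion on first argument, (p, q) = prod_decode d;
  r=5 minimisation of program d; r=6 oracle query at first argument.
  A query to the oracle at an undefined point diverges.
  ev f e xs y: program e with oracle f on input xs converges with output y.\<close>
inductive ev :: "(nat \<Rightarrow> nat option) \<Rightarrow> nat \<Rightarrow> nat list \<Rightarrow> nat \<Rightarrow> bool"
  for f :: "nat \<Rightarrow> nat option" where
  ev_zero: "e mod 7 = 0 \<Longrightarrow> ev f e xs 0"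
| ev_suc: "e mod 7 = 1 \<Longrightarrow> ev f e xs (Suc (arg 0 xs))"
| ev_proj: "e mod 7 = 2 \<Longrightarrow> ev f e xs (arg (e div 7) xs)"
| ev_comp: "e mod 7 = 3 \<Longrightarrow> prod_decode (e div 7) = (p, qc) \<Longrightarrow>
     list_all2 (\<lambda>q y. ev f q xs y) (list_decode qc) ys \<Longrightarrow> ev f p ys z \<Longrightarrow> ev f e xs z"
| ev_pr0: "e mod 7 = 4 \<Longrightarrow> prod_decode (e div 7) = (p, q) \<Longrightarrow>
     ev f p xs y \<Longrightarrow> ev f e (0 # xs) y"
| ev_prS: "e mod 7 = 4 \<Longrightarrow> prod_decode (e div 7) = (p, q) \<Longrightarrow>
     ev f e (n # xs) y \<Longrightarrow> ev f q (n # y # xs) z \<Longrightarrow> ev f e (Suc n # xs) z"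
| ev_mu: "e mod 7 = 5 \<Longrightarrow> ev f (e div 7) (n # xs) 0 \<Longrightarrow>
     (\<forall>m<n. \<exists>y. y \<noteq> 0 \<and> ev f (e div 7) (m # xs) y) \<Longrightarrow> ev f e xs n"
| ev_oracle: "e mod 7 = 6 \<Longrightarrow> f (arg 0 xs) = Some y \<Longrightarrow> ev f e xs y"

definition Phi :: "(nat \<Rightarrow> nat option) \<Rightarrow> nat \<Rightarrow> nat \<Rightarrow> nat option" where
  "Phi f e n = (if \<exists>y. ev f e [n] y then Some (THE y. ev f e [n] y) else None)"

definition chi :: "nat set \<Rightarrow> nat \<Rightarrow> nat option" where
  "chi X n = Some (if n \<in> X then 1 else 0)"

definition pjoin :: "(nat \<Rightarrow> nat option) \<Rightarrow> (nat \<Rightarrow> nat option) \<Rightarrow> nat \<Rightarrow> nat option" where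
  "pjoin \<phi> \<psi> n = (if even n then \<phi> (n div 2) else \<psi> (n div 2))"

definition ce :: "nat set \<Rightarrow> bool" where
  "ce A \<longleftrightarrow> (\<exists>e. A = {n. Phi (chi {}) e n \<noteq> None})"

definition ce_rel :: "(nat \<Rightarrow> nat \<Rightarrow> bool) \<Rightarrow> bool" where
  "ce_rel R \<longleftrightarrow> ce {prod_encode (x, u) | x u. R x u}"

definition pca_embedding ::
  "'a set \<Rightarrow> ('a \<Rightarrow> 'a \<Rightarrow> 'a option) \<Rightarrow> 'b set \<Rightarrow> ('b \<Rightarrow> 'b \<Rightarrow> 'b option) \<Rightarrow> ('a \<Rightarrow> 'b) \<Rightarrow> bool"
where
  "pca_embedding A appA B appB f \<longleftrightarrow>
     f ` A \<subseteq> B \<and> inj_on f A \<and>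
     (\<forall>a\<in>A. \<forall>b\<in>A. \<forall>c. appA a b = Some c \<longrightarrow> appB (f a) (f b) = Some (f c))"

definition Bcarrier :: "nat set \<Rightarrow> (nat \<Rightarrow> nat option) set" where
  "Bcarrier X = {\<phi>. \<exists>e. \<phi> = Phi (chi X) e}"

definition Bapp :: "(nat \<Rightarrow> nat option) \<Rightarrow> (nat \<Rightarrow> nat option) \<Rightarrow> (nat \<Rightarrow> nat option) option" where
  "Bapp \<phi> \<psi> = Some (\<lambda>n. case \<phi> 0 of None \<Rightarrow> None | Some e \<Rightarrow> Phi (pjoin \<phi> \<psi>) e n)"

text \<open>D u: the finite set with canonical code u.\<close>
definition D :: "nat \<Rightarrow> nat set" where
  "D u = {i. odd (u div 2 ^ i)}"

definition gapp :: "nat set \<Rightarrow> nat set \<Rightarrow> nat set" where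
  "gapp A B = {n. \<exists>u. prod_encode (n, u) \<in> A \<and> D u \<subseteq> B}"

definition Gapp :: "nat set \<Rightarrow> nat set \<Rightarrow> nat set option" where
  "Gapp A B = Some (gapp A B)"

inductive_set Gcarrier :: "nat set \<Rightarrow> nat set set" for Y :: "nat set" where
  G_base: "Y \<in> Gcarrier Y"
| G_ce: "ce A \<Longrightarrow> A \<in> Gcarrier Y"
| G_app: "A \<in> Gcarrier Y \<Longrightarrow> B \<in> Gcarrier Y \<Longrightarrow> gapp A B \<in> Gcarrier Y"

definition le_e :: "nat set \<Rightarrow> nat set \<Rightarrow> bool" where
  "le_e A Y \<longleftrightarrow> (\<exists>R. ce_rel R \<and> (\<forall>x. x \<in> A \<longleftrightarrow> (\<exists>u. R x u \<and> D u \<subseteq> Y)))"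

definition join_compl :: "nat set \<Rightarrow> nat set" where
  "join_compl X = {2 * n | n. n \<in> X} \<union> {2 * n + 1 | n. n \<notin> X}"

end

theory Submission
  imports Defs
begin


lemma D_eq: "D = set_decode" by (auto simp: D_def set_decode_def fun_eq_iff)

lemma list_all2_det:
  "list_all2 (\<lambda>q y. P q y \<and> (\<forall>y'. Q q y' \<longrightarrow> y = y')) qs ys \<Longrightarrow> list_all2 Q qs ys' \<Longrightarrow> ys = ys'"
proof (induction qs arbitrary: ys ys')
  case Nil then show ?case by auto
next
  case (Cons a qs)
  then show ?case by (auto simp: list_all2_Cons1)
qed

lemma ev_det: "ev f e xs y \<Longrightarrow> ev f e xs y' \<Longrightarrow> y = y'"
proof (induction arbitrary: y' rule: ev.induct)
  case (ev_zero e xs)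
  from ev_zero.prems show ?case by cases (use ev_zero.hyps in simp_all)
next
  case (ev_suc e xs)
  from ev_suc.prems show ?case by cases (use ev_suc.hyps in simp_all)
next
  case (ev_proj e xs)
  from ev_proj.prems show ?case by cases (use ev_proj.hyps in simp_all)
next
  case (ev_comp e p qc xs ys z)
  from ev_comp.prems show ?case
  proof cases
    case (ev_comp p' qc' ys')
    then have "p' = p" "qc' = qc" using ev_comp.hyps by simp_all
    then have "ys' = ys" using list_all2_det[OF ev_comp.IH(1)] ev_comp by simp
    then show ?thesis using ev_comp ev_comp.IH(2) \<open>p' = p\<close> by simp
  qed (use ev_comp.hyps in simp_all)
next
  case (ev_pr0 e p q xs y)
  from ev_pr0.prems show ?case
  proof cases
    case (ev_pr0 p' q')
    then show ?thesis using ev_pr0.hyps ev_pr0.IH by simp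
  qed (use ev_pr0.hyps in simp_all)
next
  case (ev_prS e p q n xs y z)
  from ev_prS.prems show ?case
  proof cases
    case (ev_prS p' q' y2)
    then have "p' = p" "q' = q" using ev_prS.hyps by simp_all
    then have "y2 = y" using ev_prS ev_prS.IH(1) by simp
    then show ?thesis using ev_prS ev_prS.IH(2) \<open>q' = q\<close> by simp
  qed (use ev_prS.hyps in simp_all)
next
  case (ev_mu e n xs)
  from ev_mu.prems show ?case
  proof cases
    case ev_mu
    show ?thesis
    proof (rule linorder_cases[of n y'])
      assume "n < y'"
      then obtain z where "z \<noteq> 0" "ev f (e div 7) (n # xs) z" using ev_mu by blast
      then show ?thesis using ev_mu.IH(1) by blast
    next
      assume "y' < n"
      then obtain z where "z \<noteq> 0" "ev f (e div 7) (y' # xs) z" "\<forall>z'. ev f (e div 7) (y' # xs) z' \<longrightarrow> z = z'"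
        using ev_mu.IH(2) by blast
      then show ?thesis using ev_mu by blast
    qed
  qed (use ev_mu.hyps in simp_all)
next
  case (ev_oracle e xs y)
  from ev_oracle.prems show ?case by cases (use ev_oracle.hyps in simp_all)
qed


lemma ev_mono: "ev f e xs y \<Longrightarrow> f \<subseteq>\<^sub>m g \<Longrightarrow> ev g e xs y"
proof (induction rule: ev.induct)
  case (ev_zero e xs) show ?case by (rule ev.ev_zero[OF ev_zero.hyps])
next
  case (ev_suc e xs) show ?case by (rule ev.ev_suc[OF ev_suc.hyps])
next
  case (ev_proj e xs) show ?case by (rule ev.ev_proj[OF ev_proj.hyps])
next
  case (ev_comp e p qc xs ys z)
  have "list_all2 (\<lambda>q y. ev g q xs y) (list_decode qc) ys"
    using ev_comp.IH(1) ev_comp.prems by (auto elim: list_all2_mono)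
  then show ?case by - (rule ev.ev_comp[where p=p and qc=qc and ys=ys], use ev_comp in auto)
next
  case (ev_pr0 e p q xs y) then show ?case by - (rule ev.ev_pr0[where p=p and q=q], auto)
next
  case (ev_prS e p q n xs y z) then show ?case by - (rule ev.ev_prS[where p=p and q=q and y=y], auto)
next
  case (ev_mu e n xs)
  then show ?case by - (rule ev.ev_mu, blast+)
next
  case (ev_oracle e xs y)
  then show ?case by - (rule ev.ev_oracle, auto simp: map_le_def dom_def)
qed

lemma restrict_mono: "A \<subseteq> B \<Longrightarrow> g |` A \<subseteq>\<^sub>m g |` B"
  by (auto simp: map_le_def restrict_map_def)

lemma list_all2_fin:
  assumes "list_all2 (\<lambda>q y. \<exists>Q. finite Q \<and> ev (g |` Q) q xs y) qs ys"
  shows "\<exists>Q. finite Q \<and> list_all2 (\<lambda>q y. ev (g |` Q) q xs y) qs ys"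
  using assms
proof (induction qs arbitrary: ys)
  case Nil then show ?case by auto
next
  case (Cons a qs)
  then obtain y ys' where ys: "ys = y # ys'" and h1: "\<exists>Q. finite Q \<and> ev (g |` Q) a xs y"
    and h2: "list_all2 (\<lambda>q y. \<exists>Q. finite Q \<and> ev (g |` Q) q xs y) qs ys'"
    by (auto simp: list_all2_Cons1)
  obtain Q1 where Q1: "finite Q1" "ev (g |` Q1) a xs y" using h1 by blast
  obtain Q2 where Q2: "finite Q2" "list_all2 (\<lambda>q y. ev (g |` Q2) q xs y) qs ys'" using Cons.IH h2 by blast
  have "ev (g |` (Q1 \<union> Q2)) a xs y" using Q1 ev_mono restrict_mono by (metis sup_ge1)
  moreover have "list_all2 (\<lambda>q y. ev (g |` (Q1 \<union> Q2)) q xs y) qs ys'"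
    using Q2(2) by (rule list_all2_mono) (metis ev_mono restrict_mono sup_ge2)
  ultimately show ?case using Q1 Q2 ys by (intro exI[of _ "Q1 \<union> Q2"]) auto
qed

lemma ev_sub: "ev (g |` Q) e xs y \<Longrightarrow> Q \<subseteq> Q' \<Longrightarrow> ev (g |` Q') e xs y"
  using ev_mono restrict_mono by blast

lemma ev_use: "ev g e xs y \<Longrightarrow> \<exists>Q. finite Q \<and> ev (g |` Q) e xs y"
proof (induction rule: ev.induct)
  case (ev_zero e xs)
  have "ev (g |` {}) e xs 0" by (rule ev.ev_zero[OF ev_zero.hyps])
  then show ?case by blast
next
  case (ev_suc e xs)
  have "ev (g |` {}) e xs (Suc (arg 0 xs))" by (rule ev.ev_suc[OF ev_suc.hyps])
  then show ?case by blast
next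
  case (ev_proj e xs)
  have "ev (g |` {}) e xs (arg (e div 7) xs)" by (rule ev.ev_proj[OF ev_proj.hyps])
  then show ?case by blast
next
  case (ev_comp e p qc xs ys z)
  have "list_all2 (\<lambda>q y. \<exists>Q. finite Q \<and> ev (g |` Q) q xs y) (list_decode qc) ys"
    using ev_comp.IH(1) by (rule list_all2_mono) blast
  then obtain Q1 where Q1: "finite Q1" "list_all2 (\<lambda>q y. ev (g |` Q1) q xs y) (list_decode qc) ys"
    using list_all2_fin by blast
  obtain Q2 where Q2: "finite Q2" "ev (g |` Q2) p ys z" using ev_comp.IH(2) by blast
  have "list_all2 (\<lambda>q y. ev (g |` (Q1 \<union> Q2)) q xs y) (list_decode qc) ys"
    using Q1(2) by (rule list_all2_mono) (erule ev_sub, blast)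
  moreover have "ev (g |` (Q1 \<union> Q2)) p ys z" using Q2(2) by (rule ev_sub) blast
  ultimately have "ev (g |` (Q1 \<union> Q2)) e xs z" using ev_comp.hyps by - (rule ev.ev_comp[where p=p and qc=qc and ys=ys], auto)
  then show ?case using Q1 Q2 by blast
next
  case (ev_pr0 e p q xs y)
  then obtain Q where Q: "finite Q" "ev (g |` Q) p xs y" by blast
  have "ev (g |` Q) e (0 # xs) y" by (rule ev.ev_pr0[OF ev_pr0.hyps(1,2) Q(2)])
  then show ?case using Q by blast
next
  case (ev_prS e p q n xs y z)
  obtain Q1 where Q1: "finite Q1" "ev (g |` Q1) e (n # xs) y" using ev_prS.IH(1) by blast
  obtain Q2 where Q2: "finite Q2" "ev (g |` Q2) q (n # y # xs) z" using ev_prS.IH(2) by blast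
  have "ev (g |` (Q1 \<union> Q2)) e (n # xs) y" using Q1(2) by (rule ev_sub) blast
  moreover have "ev (g |` (Q1 \<union> Q2)) q (n # y # xs) z" using Q2(2) by (rule ev_sub) blast
  ultimately have "ev (g |` (Q1 \<union> Q2)) e (Suc n # xs) z" using ev_prS.hyps by - (rule ev.ev_prS[where p=p and q=q and y=y], auto)
  then show ?case using Q1 Q2 by blast
next
  case (ev_mu e n xs)
  obtain Q0 where Q0: "finite Q0" "ev (g |` Q0) (e div 7) (n # xs) 0" using ev_mu.IH(1) by blast
  have "\<forall>m\<in>{..<n}. \<exists>QY. finite (fst QY) \<and> snd QY \<noteq> 0 \<and> ev (g |` fst QY) (e div 7) (m # xs) (snd QY)"
    using ev_mu.IH(2) by fastforce
  then obtain F where F: "\<forall>m\<in>{..<n}. finite (fst (F m)) \<and> snd (F m) \<noteq> 0 \<and> ev (g |` fst (F m)) (e div 7) (m # xs) (snd (F m))"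
    by (rule bchoice[elim_format]) blast
  define Q where "Q = Q0 \<union> (\<Union>m<n. fst (F m))"
  have fin: "finite Q" using Q0 F by (auto simp: Q_def)
  have "ev (g |` Q) (e div 7) (n # xs) 0" using Q0(2) by (rule ev_sub) (auto simp: Q_def)
  moreover have "\<forall>m<n. \<exists>y. y \<noteq> 0 \<and> ev (g |` Q) (e div 7) (m # xs) y"
  proof (intro allI impI)
    fix m assume m: "m < n"
    then have "fst (F m) \<subseteq> Q" by (auto simp: Q_def)
    moreover have "snd (F m) \<noteq> 0 \<and> ev (g |` fst (F m)) (e div 7) (m # xs) (snd (F m))" using F m by auto
    ultimately show "\<exists>y. y \<noteq> 0 \<and> ev (g |` Q) (e div 7) (m # xs) y"
      using ev_sub by blast
  qed
  ultimately have "ev (g |` Q) e xs n" using ev_mu.hyps by - (rule ev.ev_mu, auto)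
  then show ?case using fin by blast
next
  case (ev_oracle e xs y)
  then have "ev (g |` {arg 0 xs}) e xs y" by - (rule ev.ev_oracle, auto)
  then show ?case by blast
qed


datatype ptm = Z | Sc | Pj nat | Cm ptm "ptm list" | Rc ptm ptm | Orc

fun code :: "ptm \<Rightarrow> nat" where
  "code Z = 0"
| "code Sc = 1"
| "code (Pj i) = 7 * i + 2"
| "code (Cm f gs) = 7 * prod_encode (code f, list_encode (map code gs)) + 3"
| "code (Rc g h) = 7 * prod_encode (code g, code h) + 4"
| "code Orc = 6"

fun peval :: "(nat \<Rightarrow> nat) \<Rightarrow> ptm \<Rightarrow> nat list \<Rightarrow> nat" where
  "peval og Z xs = 0"
| "peval og Sc xs = Suc (arg 0 xs)"
| "peval og (Pj i) xs = arg i xs"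
| "peval og (Cm f gs) xs = peval og f (map (\<lambda>t. peval og t xs) gs)"
| "peval og (Rc g h) xs = (case xs of [] \<Rightarrow> 0 | n # ys \<Rightarrow> rec_nat (peval og g ys) (\<lambda>i y. peval og h (i # y # ys)) n)"
| "peval og Orc xs = og (arg 0 xs)"

fun wf :: "ptm \<Rightarrow> nat \<Rightarrow> bool" where
  "wf (Cm f gs) k = (wf f (length gs) \<and> (\<forall>t\<in>set gs. wf t k))"
| "wf (Rc g h) k = (1 \<le> k \<and> wf g (k - 1) \<and> wf h (Suc (Suc (k - 1))))"
| "wf _ k = True"

lemma list_all2_map_map: "(\<forall>t\<in>set gs. P (f t) (g t)) \<Longrightarrow> list_all2 P (map f gs) (map g gs)"
  by (induction gs) auto

lemma compile:
  "wf t (length xs) \<Longrightarrow> ev (\<lambda>a. Some (og a)) (code t) xs (peval og t xs)"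
proof (induction t arbitrary: xs)
  case Z then show ?case by (simp add: ev.ev_zero)
next
  case Sc then show ?case using ev.ev_suc[of 1] by simp
next
  case (Pj i)
  have "(7 * i + 2) mod 7 = 2" "(7 * i + 2) div 7 = i" by presburger+
  then show ?case using ev.ev_proj[of "7 * i + 2" "\<lambda>a. Some (og a)" xs] by (simp del: One_nat_def add_2_eq_Suc add_2_eq_Suc')
next
  case Orc then show ?case using ev.ev_oracle[of 6] by simp
next
  case (Cm f gs)
  have l: "list_all2 (\<lambda>q y. ev (\<lambda>a. Some (og a)) q xs y) (map code gs) (map (\<lambda>t. peval og t xs) gs)"
    using Cm by (intro list_all2_map_map) simp
  have "ev (\<lambda>a. Some (og a)) (code f) (map (\<lambda>t. peval og t xs) gs) (peval og f (map (\<lambda>t. peval og t xs) gs))"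
    using Cm by simp
  then show ?case
    by - (rule ev.ev_comp[where p="code f" and qc="list_encode (map code gs)"], use l in simp_all)
next
  case (Rc g h)
  then obtain n ys where xs: "xs = n # ys" by (cases xs) auto
  have g: "ev (\<lambda>a. Some (og a)) (code g) ys (peval og g ys)" using Rc xs by simp
  have "ev (\<lambda>a. Some (og a)) (code (Rc g h)) (m # ys) (rec_nat (peval og g ys) (\<lambda>i y. peval og h (i # y # ys)) m)" for m
  proof (induction m)
    case 0 then show ?case by - (rule ev.ev_pr0[where p="code g" and q="code h"], use g in simp_all)
  next
    case (Suc m)
    have "ev (\<lambda>a. Some (og a)) (code h) (m # rec_nat (peval og g ys) (\<lambda>i y. peval og h (i # y # ys)) m # ys)
       (peval og h (m # rec_nat (peval og g ys) (\<lambda>i y. peval og h (i # y # ys)) m # ys))"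
      using Rc xs by simp
    then show ?case by - (rule ev.ev_prS[where p="code g" and q="code h"], use Suc in simp_all)
  qed
  then show ?case using xs by simp
qed

lemma compile_Phi:
  assumes "wf t 1"
  shows "Phi (\<lambda>a. Some (og a)) (code t) = (\<lambda>n. Some (peval og t [n]))"
proof
  fix n
  have "ev (\<lambda>a. Some (og a)) (code t) [n] (peval og t [n])" using compile[of t "[n]"] assms by simp
  then show "Phi (\<lambda>a. Some (og a)) (code t) n = Some (peval og t [n])"
    unfolding Phi_def using ev_det by (metis (mono_tags, lifting) the_equality)
qed


lemma arg_simps[simp]: "arg 0 (x # xs) = x" "arg (Suc i) (x # xs) = arg i xs" "arg i [] = 0"
  "arg (numeral k) (x # xs) = arg (pred_numeral k) xs"
  by (simp_all add: arg_def numeral_eq_Suc)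

fun cst :: "nat \<Rightarrow> ptm" where
  "cst 0 = Z" | "cst (Suc c) = Cm Sc [cst c]"

lemma cst_wf[simp]: "wf (cst c) k" by (induction c) auto
lemma cst_ev[simp]: "peval og (cst c) xs = c" by (induction c) auto

definition "tAdd = Rc (Pj 0) (Cm Sc [Pj 1])"
definition "tPred = Rc Z (Pj 0)"
definition "tMonus = Cm (Rc (Pj 0) (Cm tPred [Pj 1])) [Pj 1, Pj 0]"
definition "tMul = Rc Z (Cm tAdd [Pj 1, Pj 2])"
definition "tTri = Rc Z (Cm tAdd [Pj 1, Cm Sc [Pj 0]])"
definition "tPe = Cm tAdd [Cm tTri [Cm tAdd [Pj 0, Pj 1]], Pj 0]"
definition "tLe = Cm tMonus [cst 1, Cm tMonus [Pj 0, Pj 1]]"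
definition "tSroot = Rc Z (Cm tAdd [Pj 1, Cm tLe [Cm tTri [Cm Sc [Pj 1]], Cm Sc [Pj 0]]])"
definition "tFst = Cm tMonus [Pj 0, Cm tTri [tSroot]]"
definition "tSnd = Cm tMonus [tSroot, tFst]"

lemma wf_base[simp]: "wf tAdd (Suc (Suc 0))" "wf tPred (Suc 0)" "wf tMonus (Suc (Suc 0))" "wf tMul (Suc (Suc 0))" "wf tTri (Suc 0)" "wf tPe (Suc (Suc 0))"
  "wf tLe (Suc (Suc 0))" "wf tSroot (Suc 0)" "wf tFst (Suc 0)" "wf tSnd (Suc 0)"
  by (simp_all add: tAdd_def tPred_def tMonus_def tMul_def tTri_def tPe_def tLe_def tSroot_def tFst_def tSnd_def)

lemma ev_tAdd[simp]: "peval og tAdd [a, b] = a + b"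
  by (induction a) (simp_all add: tAdd_def)
lemma ev_tPred[simp]: "peval og tPred [a] = a - 1"
  by (cases a) (simp_all add: tPred_def)
lemma ev_tMonus[simp]: "peval og tMonus [a, b] = a - b"
  by (induction b) (simp_all add: tMonus_def)
lemma ev_tMul[simp]: "peval og tMul [a, b] = a * b"
  by (induction a) (simp_all add: tMul_def)
lemma ev_tTri[simp]: "peval og tTri [a] = triangle a"
  by (induction a) (simp_all add: tTri_def)
lemma ev_tPe[simp]: "peval og tPe [a, b] = prod_encode (a, b)"
  by (simp add: tPe_def prod_encode_def)
lemma ev_tLe[simp]: "peval og tLe [a, b] = (if a \<le> b then 1 else 0)"
  by (simp add: tLe_def)

fun sroot :: "nat \<Rightarrow> nat" where
  "sroot 0 = 0"
| "sroot (Suc c) = sroot c + (if triangle (Suc (sroot c)) \<le> Suc c then 1 else 0)"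

lemma ev_tSroot[simp]: "peval og tSroot [c] = sroot c"
  by (induction c) (simp_all add: tSroot_def)

lemma sroot_bounds: "triangle (sroot c) \<le> c \<and> c < triangle (Suc (sroot c))"
  by (induction c) auto

lemma prod_decode_sroot:
  "prod_decode c = (c - triangle (sroot c), sroot c - (c - triangle (sroot c)))"
proof -
  let ?s = "sroot c"
  let ?a = "c - triangle ?s"
  let ?b = "?s - ?a"
  have b1: "triangle ?s \<le> c" "c < triangle (Suc ?s)" using sroot_bounds by auto
  then have "?a \<le> ?s" by simp
  then have "?a + ?b = ?s" by simp
  then have "prod_encode (?a, ?b) = c" using b1 by (simp add: prod_encode_def)
  then show ?thesis by (metis prod_encode_inverse)
qed

lemma ev_tFst[simp]: "peval og tFst [c] = fst (prod_decode c)"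
  by (simp add: tFst_def prod_decode_sroot)
lemma ev_tSnd[simp]: "peval og tSnd [c] = snd (prod_decode c)"
  by (simp add: tSnd_def prod_decode_sroot)


definition prc :: "(nat \<Rightarrow> nat) \<Rightarrow> bool" where
  "prc F \<longleftrightarrow> (\<exists>t. wf t 1 \<and> (\<forall>og n. peval og t [n] = F n))"

abbreviation "pd1 m \<equiv> fst (prod_decode m)"
abbreviation "pd2 m \<equiv> snd (prod_decode m)"

lemma prc_id: "prc (\<lambda>n. n)"
  unfolding prc_def by (rule exI[of _ "Pj 0"]) simp

lemma prc_const: "prc (\<lambda>n. c)"
  unfolding prc_def by (rule exI[of _ "cst c"]) simp

lemma prc_un:
  assumes "wf t (Suc 0)" "\<And>og a. peval og t [a] = h a" "prc F"
  shows "prc (\<lambda>n. h (F n))"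
proof -
  obtain tF where "wf tF 1" "\<And>og n. peval og tF [n] = F n" using assms(3) unfolding prc_def by blast
  then show ?thesis unfolding prc_def using assms by (intro exI[of _ "Cm t [tF]"]) simp
qed

lemma prc_bin:
  assumes "wf t (Suc (Suc 0))" "\<And>og a b. peval og t [a, b] = h a b" "prc F" "prc G"
  shows "prc (\<lambda>n. h (F n) (G n))"
proof -
  obtain tF where F: "wf tF 1" "\<And>og n. peval og tF [n] = F n" using assms(3) unfolding prc_def by blast
  obtain tG where G: "wf tG 1" "\<And>og n. peval og tG [n] = G n" using assms(4) unfolding prc_def by blast
  have "wf (Cm t [tF, tG]) 1" using F(1) G(1) assms(1) by simp
  moreover have "peval og (Cm t [tF, tG]) [n] = h (F n) (G n)" for og n
    using F(2) G(2) assms(2) by simp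
  ultimately show ?thesis unfolding prc_def by blast
qed

lemma prc_comp: "prc H \<Longrightarrow> prc F \<Longrightarrow> prc (\<lambda>n. H (F n))"
proof -
  assume "prc H" "prc F"
  then obtain tH where "wf tH 1" "\<And>og n. peval og tH [n] = H n" unfolding prc_def by blast
  then show ?thesis using \<open>prc F\<close> by (intro prc_un[of tH H]) simp_all
qed

lemma prc_add: "prc F \<Longrightarrow> prc G \<Longrightarrow> prc (\<lambda>n. F n + G n)"
  by (rule prc_bin[of tAdd "(+)"]) simp_all
lemma prc_minus: "prc F \<Longrightarrow> prc G \<Longrightarrow> prc (\<lambda>n. F n - G n)"
  by (rule prc_bin[of tMonus "(-)"]) simp_all
lemma prc_mult: "prc F \<Longrightarrow> prc G \<Longrightarrow> prc (\<lambda>n. F n * G n)"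
  by (rule prc_bin[of tMul "(*)"]) simp_all
lemma prc_pe: "prc F \<Longrightarrow> prc G \<Longrightarrow> prc (\<lambda>n. prod_encode (F n, G n))"
  by (rule prc_bin[of tPe "\<lambda>a b. prod_encode (a, b)"]) simp_all
lemma prc_fst: "prc F \<Longrightarrow> prc (\<lambda>n. fst (prod_decode (F n)))"
  by (rule prc_un[of tFst "\<lambda>a. fst (prod_decode a)"]) simp_all
lemma prc_snd: "prc F \<Longrightarrow> prc (\<lambda>n. snd (prod_decode (F n)))"
  by (rule prc_un[of tSnd "\<lambda>a. snd (prod_decode a)"]) simp_all
lemma prc_Suc: "prc F \<Longrightarrow> prc (\<lambda>n. Suc (F n))"
  by (rule prc_un[of Sc Suc]) simp_all

lemma prc_rec:
  assumes "prc G" "prc (\<lambda>m. H (pd1 m) (pd1 (pd2 m)) (pd2 (pd2 m)))" "prc K"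
  shows "prc (\<lambda>n. rec_nat (G n) (\<lambda>i y. H i y n) (K n))"
proof -
  obtain tG where G: "wf tG 1" "\<And>og n. peval og tG [n] = G n" using assms(1) unfolding prc_def by blast
  obtain tH where H: "wf tH 1" "\<And>og m. peval og tH [m] = H (pd1 m) (pd1 (pd2 m)) (pd2 (pd2 m))"
    using assms(2) unfolding prc_def by blast
  obtain tK where K: "wf tK 1" "\<And>og n. peval og tK [n] = K n" using assms(3) unfolding prc_def by blast
  let ?t = "Cm (Rc tG (Cm tH [Cm tPe [Pj 0, Cm tPe [Pj 1, Pj 2]]])) [tK, Pj 0]"
  have "wf ?t 1" using G H K by simp
  moreover have "peval og ?t [n] = rec_nat (G n) (\<lambda>i y. H i y n) (K n)" for og n
    using G H K by simp
  ultimately show ?thesis unfolding prc_def by blast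
qed

lemma prc_cong: "prc F \<Longrightarrow> (\<And>n. F n = G n) \<Longrightarrow> prc G"
proof -
  assume "prc F" "\<And>n. F n = G n"
  then have "F = G" by auto
  then show ?thesis using \<open>prc F\<close> by simp
qed

definition prcB :: "(nat \<Rightarrow> bool) \<Rightarrow> bool" where
  "prcB P \<longleftrightarrow> prc (\<lambda>n. if P n then 1 else 0)"

lemma prc_if:
  assumes "prcB P" "prc F" "prc G"
  shows "prc (\<lambda>n. if P n then F n else G n)"
proof -
  have "prc (\<lambda>n. (if P n then 1 else 0) * F n + (1 - (if P n then 1 else 0)) * G n)"
    using assms unfolding prcB_def by (intro prc_add prc_mult prc_minus prc_const)
  moreover have "(\<lambda>n. (if P n then 1 else 0) * F n + (1 - (if P n then 1 else 0)) * G n) = (\<lambda>n. if P n then F n else G n)"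
    by auto
  ultimately show ?thesis by simp
qed

lemma prcB_const: "prcB (\<lambda>n. b)"
  unfolding prcB_def by (rule prc_const)

lemma prcB_eq:
  assumes "prc F" "prc G" shows "prcB (\<lambda>n. F n = G n)"
proof -
  have "prc (\<lambda>n. (1 - (F n - G n)) * (1 - (G n - F n)))"
    using assms by (intro prc_mult prc_minus prc_const)
  moreover have "(1 - (a - b)) * (1 - (b - a)) = (if a = b then 1 else (0::nat))" for a b :: nat
    by auto
  ultimately show ?thesis unfolding prcB_def by simp
qed

lemma prcB_le:
  assumes "prc F" "prc G" shows "prcB (\<lambda>n. F n \<le> G n)"
proof -
  have "prc (\<lambda>n. 1 - (F n - G n))" using assms by (intro prc_minus prc_const)
  moreover have "1 - (a - b) = (if a \<le> b then 1 else (0::nat))" for a b :: nat by auto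
  ultimately show ?thesis unfolding prcB_def by simp
qed

lemma prcB_less:
  assumes "prc F" "prc G" shows "prcB (\<lambda>n. F n < G n)"
proof -
  have "prcB (\<lambda>n. Suc (F n) \<le> G n)" using assms by (intro prcB_le prc_Suc)
  then show ?thesis by (simp add: Suc_le_eq)
qed

lemma prcB_not: "prcB P \<Longrightarrow> prcB (\<lambda>n. \<not> P n)"
proof -
  assume "prcB P"
  then have "prc (\<lambda>n. 1 - (if P n then 1 else 0))" unfolding prcB_def by (intro prc_minus prc_const)
  then show ?thesis unfolding prcB_def by (rule prc_cong) simp
qed

lemma prcB_conj: "prcB P \<Longrightarrow> prcB Q \<Longrightarrow> prcB (\<lambda>n. P n \<and> Q n)"
proof -
  assume "prcB P" "prcB Q"
  then have "prc (\<lambda>n. (if P n then 1 else 0) * (if Q n then 1 else 0))" unfolding prcB_def by (intro prc_mult)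
  then show ?thesis unfolding prcB_def by (rule prc_cong) simp
qed

lemma prcB_disj: "prcB P \<Longrightarrow> prcB Q \<Longrightarrow> prcB (\<lambda>n. P n \<or> Q n)"
proof -
  assume "prcB P" "prcB Q"
  then have "prcB (\<lambda>n. \<not> (\<not> P n \<and> \<not> Q n))" by (intro prcB_not prcB_conj)
  then show ?thesis by simp
qed

lemma prcB_imp: "prcB P \<Longrightarrow> prcB Q \<Longrightarrow> prcB (\<lambda>n. P n \<longrightarrow> Q n)"
proof -
  assume "prcB P" "prcB Q"
  then have "prcB (\<lambda>n. \<not> P n \<or> Q n)" by (intro prcB_not prcB_disj)
  then show ?thesis by simp
qed

lemma prcB_iff: "prcB P \<Longrightarrow> prcB Q \<Longrightarrow> prcB (\<lambda>n. P n \<longleftrightarrow> Q n)"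
proof -
  assume "prcB P" "prcB Q"
  then have "prcB (\<lambda>n. (P n \<longrightarrow> Q n) \<and> (Q n \<longrightarrow> P n))" by (intro prcB_imp prcB_conj)
  then show ?thesis by (simp add: iff_conv_conj_imp)
qed

lemma prcB_comp: "prcB P \<Longrightarrow> prc F \<Longrightarrow> prcB (\<lambda>n. P (F n))"
  unfolding prcB_def by (drule prc_comp) auto

lemma rec_all: "rec_nat 1 (\<lambda>i y. y * (if P i then 1 else 0)) b = (if \<forall>i<b. P i then 1 else (0::nat))"
  by (induction b) (auto simp: less_Suc_eq)

lemma prcB_all_less:
  assumes P: "prcB (\<lambda>m. P (pd1 m) (pd2 m))" and B: "prc B"
  shows "prcB (\<lambda>n. \<forall>i. i < B n \<longrightarrow> P i n)"
proof -
  have P': "prcB (\<lambda>m. P (pd1 m) (pd2 (pd2 m)))"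
    using prcB_comp[OF P, of "\<lambda>m. prod_encode (pd1 m, pd2 (pd2 m))"]
    by (simp add: prc_pe prc_fst prc_snd prc_id)
  have "prc (\<lambda>n. rec_nat 1 (\<lambda>i y. y * (if P i n then 1 else 0)) (B n))"
    apply (rule prc_rec[OF prc_const _ B])
    apply (rule prc_mult)
     apply (intro prc_fst prc_snd prc_id)
    using P' unfolding prcB_def by simp
  then show ?thesis unfolding prcB_def by (rule prc_cong) (simp only: rec_all)
qed

lemma prcB_ex_less:
  assumes P: "prcB (\<lambda>m. P (pd1 m) (pd2 m))" and B: "prc B"
  shows "prcB (\<lambda>n. \<exists>i. i < B n \<and> P i n)"
proof -
  have "prcB (\<lambda>n. \<not> (\<forall>i. i < B n \<longrightarrow> \<not> P i n))"
    by (rule prcB_not, rule prcB_all_less[OF _ B], rule prcB_not[OF P])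
  then show ?thesis by simp
qed


lemma bm_eq: "rec_nat 0 (\<lambda>j y. if y < j then y else if P j then j else Suc j) b
   = (if \<exists>i<b. P i then (LEAST i. P i) else b)"
proof (induction b)
  case 0 then show ?case by simp
next
  case (Suc b)
  show ?case
  proof (cases "\<exists>i<b. P i")
    case True
    then have "(LEAST i. P i) < b" by (meson LeastI_ex Least_le order_le_less_trans)
    then show ?thesis using Suc True by (auto simp: less_Suc_eq)
  next
    case False
    then have "\<not> (\<exists>i<b. P i)" by simp
    moreover have "P b \<Longrightarrow> (LEAST i. P i) = b" using False by (metis Least_equality not_less)
    ultimately show ?thesis using Suc False by (auto simp: less_Suc_eq)
  qed
qed

lemma prcB_pair_comp:
  assumes "prcB (\<lambda>m. P (pd1 m) (pd2 m))"
  shows "prcB (\<lambda>m. P (pd1 m) (pd2 (pd2 m)))"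
  using prcB_comp[OF assms, of "\<lambda>m. prod_encode (pd1 m, pd2 (pd2 m))"]
  by (simp add: prc_pe prc_fst prc_snd prc_id)

lemma prc_bmin:
  assumes P: "prcB (\<lambda>m. P (pd1 m) (pd2 m))" and B: "prc B"
  shows "prc (\<lambda>n. if \<exists>i<B n. P i n then (LEAST i. P i n) else B n)"
proof -
  have P': "prcB (\<lambda>m. P (pd1 m) (pd2 (pd2 m)))" by (rule prcB_pair_comp[OF P])
  have "prc (\<lambda>n. rec_nat 0 (\<lambda>j y. if y < j then y else if P j n then j else Suc j) (B n))"
    apply (rule prc_rec[OF prc_const _ B])
    apply (rule prc_if)
      apply (rule prcB_less; intro prc_fst prc_snd prc_id)
     apply (intro prc_fst prc_snd prc_id)
    apply (rule prc_if[OF P'])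
     apply (intro prc_fst prc_snd prc_id prc_Suc)+
    done
  then show ?thesis by (rule prc_cong) (simp only: bm_eq)
qed

lemma div_least: "0 < b \<Longrightarrow> (LEAST q. a < Suc q * b) = a div (b::nat)"
proof (rule Least_equality)
  assume "0 < b"
  show "a < Suc (a div b) * b" using \<open>0 < b\<close>
    by (metis add.commute div_mult_mod_eq mod_less_divisor mult_Suc nat_add_left_cancel_less)
  show "\<And>y. a < Suc y * b \<Longrightarrow> a div b \<le> y" using \<open>0 < b\<close>
    by (metis less_Suc_eq_le less_mult_imp_div_less)
qed

lemma prc_div:
  assumes "prc F" "prc G" shows "prc (\<lambda>n. F n div G n)"
proof -
  have "prc (\<lambda>n. if G n = 0 then 0 else (if \<exists>q<Suc (F n). F n < Suc q * G n then (LEAST q. F n < Suc q * G n) else Suc (F n)))"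
    apply (rule prc_if)
      apply (rule prcB_eq[OF assms(2) prc_const])
     apply (rule prc_const)
    apply (rule prc_bmin)
     apply (rule prcB_less)
      apply (rule prc_comp[OF assms(1)], intro prc_snd prc_id)
     apply (rule prc_mult, intro prc_Suc prc_fst prc_id)
     apply (rule prc_comp[OF assms(2)], intro prc_snd prc_id)
    apply (rule prc_Suc[OF assms(1)])
    done
  moreover have "(if b = 0 then 0 else (if \<exists>q<Suc a. a < Suc q * b then (LEAST q. a < Suc q * b) else Suc a)) = a div b"
    for a b :: nat
  proof (cases "b = 0")
    case False
    have "a < Suc a * b" using False by (simp add: le_less_trans[of a "a * b"])
    then show ?thesis using False div_least[of b a] by auto
  qed simp
  ultimately show ?thesis by (rule prc_cong)
qed

lemma prc_mod:
  assumes "prc F" "prc G" shows "prc (\<lambda>n. F n mod G n)"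
proof -
  have "prc (\<lambda>n. F n - G n * (F n div G n))" using assms by (intro prc_minus prc_mult prc_div)
  then show ?thesis by (rule prc_cong) (simp add: minus_mult_div_eq_mod)
qed

lemma prc_pow:
  assumes "prc F" "prc G" shows "prc (\<lambda>n. F n ^ G n)"
proof -
  have "prc (\<lambda>n. rec_nat 1 (\<lambda>i y. y * F n) (G n))"
    apply (rule prc_rec[OF prc_const _ assms(2)])
    apply (rule prc_mult, intro prc_fst prc_snd prc_id)
    apply (rule prc_comp[OF assms(1)], intro prc_fst prc_snd prc_id)
    done
  moreover have "rec_nat 1 (\<lambda>i y. y * a) b = a ^ b" for a b :: nat by (induction b) auto
  ultimately show ?thesis by (rule prc_cong)
qed

lemma prcB_even: "prc F \<Longrightarrow> prcB (\<lambda>n. even (F n))"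
proof -
  assume "prc F"
  then have "prcB (\<lambda>n. F n mod 2 = 0)" by (intro prcB_eq prc_mod prc_const)
  then show ?thesis by (simp add: even_iff_mod_2_eq_zero)
qed

lemma prcB_odd: "prc F \<Longrightarrow> prcB (\<lambda>n. odd (F n))"
  by (intro prcB_not prcB_even)

lemma prcB_mem: "prc F \<Longrightarrow> prc G \<Longrightarrow> prcB (\<lambda>n. F n \<in> set_decode (G n))"
proof -
  assume "prc F" "prc G"
  then have "prcB (\<lambda>n. odd (G n div 2 ^ F n))" by (intro prcB_odd prc_div prc_pow prc_const)
  then show ?thesis by (simp add: set_decode_def)
qed

definition "tlc l = snd (prod_decode (l - 1))"
definition "hdc l = fst (prod_decode (l - 1))"
definition "itl k l = rec_nat l (\<lambda>i y. tlc y) k"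

lemma list_decode_tlc: "list_decode (tlc l) = tl (list_decode l)"
proof (cases l)
  case 0
  have "prod_decode 0 = (0, 0)" by (simp add: prod_decode_def prod_decode_aux.simps)
  then show ?thesis using 0 by (simp add: tlc_def)
next
  case (Suc k)
  then show ?thesis by (simp add: tlc_def split: prod.split)
qed

lemma list_decode_hdc: "l \<noteq> 0 \<Longrightarrow> hd (list_decode l) = hdc l"
  by (cases l) (auto simp: hdc_def split: prod.split)

lemma list_decode_itl: "list_decode (itl k l) = drop k (list_decode l)"
  by (induction k) (simp_all add: itl_def list_decode_tlc drop_Suc tl_drop)

lemma list_decode_zero_iff: "list_decode l = [] \<longleftrightarrow> l = 0"
  by (metis list_decode.simps(1) list_decode_inverse list_encode.simps(1))

lemma itl_zero_iff: "itl k l = 0 \<longleftrightarrow> length (list_decode l) \<le> k"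
  by (metis drop_eq_Nil list_decode_itl list_decode_zero_iff)

lemma arg_itl: "arg i (list_decode l) = (if itl i l = 0 then 0 else hdc (itl i l))"
proof (cases "itl i l = 0")
  case True then show ?thesis by (simp add: itl_zero_iff arg_def)
next
  case False
  then have "i < length (list_decode l)" by (simp add: itl_zero_iff)
  moreover have "hdc (itl i l) = hd (drop i (list_decode l))" using False list_decode_hdc list_decode_itl by metis
  ultimately show ?thesis using False by (simp add: arg_def hd_drop_conv_nth)
qed

lemma length_le_encode: "length xs \<le> list_encode xs"
proof (induction xs)
  case (Cons x xs)
  then show ?case using le_prod_encode_2[of "list_encode xs" x] by simp
qed simp

lemma length_itl: "length (list_decode l) = (if \<exists>k<Suc l. itl k l = 0 then (LEAST k. itl k l = 0) else Suc l)"
proof -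
  have le: "length (list_decode l) \<le> l" using length_le_encode[of "list_decode l"] by simp
  have "(LEAST k. itl k l = 0) = length (list_decode l)"
    by (rule Least_equality) (simp_all add: itl_zero_iff)
  moreover have "\<exists>k<Suc l. itl k l = 0" using le by (intro exI[of _ "length (list_decode l)"]) (simp add: itl_zero_iff)
  ultimately show ?thesis by simp
qed

lemma prc_tlc: "prc F \<Longrightarrow> prc (\<lambda>n. tlc (F n))"
  unfolding tlc_def by (intro prc_snd prc_minus prc_const)

lemma prc_hdc: "prc F \<Longrightarrow> prc (\<lambda>n. hdc (F n))"
  unfolding hdc_def by (intro prc_fst prc_minus prc_const)

lemma prc_itl: "prc K \<Longrightarrow> prc L \<Longrightarrow> prc (\<lambda>n. itl (K n) (L n))"
  unfolding itl_def
  by (rule prc_rec) (assumption, rule prc_tlc, intro prc_fst prc_snd prc_id, assumption)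

lemma prc_arg: "prc F \<Longrightarrow> prc G \<Longrightarrow> prc (\<lambda>n. arg (F n) (list_decode (G n)))"
  unfolding arg_itl
  by (intro prc_if prcB_eq prc_itl prc_const prc_hdc)

lemma prc_length: "prc F \<Longrightarrow> prc (\<lambda>n. length (list_decode (F n)))"
  unfolding length_itl
  apply (rule prc_bmin)
   apply (rule prcB_eq[OF prc_itl prc_const])
    apply (intro prc_fst prc_id)
   apply (rule prc_comp, assumption, intro prc_snd prc_id)
  apply (rule prc_Suc, assumption)
  done


definition sig :: "(nat \<Rightarrow> bool) \<Rightarrow> bool" where
  "sig P \<longleftrightarrow> (\<exists>Q. prcB Q \<and> (\<forall>n. P n = (\<exists>z. Q (prod_encode (z, n)))))"

lemma prc_pd: "prc (\<lambda>m. pd1 m)" "prc (\<lambda>m. pd2 m)"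
  by (intro prc_fst prc_snd prc_id)+

lemma sig_prcB: "prcB P \<Longrightarrow> sig P"
  unfolding sig_def
  by (rule exI[of _ "\<lambda>m. P (pd2 m)"]) (auto intro: prcB_comp[of P "\<lambda>m. pd2 m"] prc_pd)

lemma sig_conj:
  assumes "sig P" "sig R" shows "sig (\<lambda>n. P n \<and> R n)"
proof -
  obtain Q1 where Q1: "prcB Q1" "\<And>n. P n = (\<exists>z. Q1 (prod_encode (z, n)))" using assms(1) unfolding sig_def by blast
  obtain Q2 where Q2: "prcB Q2" "\<And>n. R n = (\<exists>z. Q2 (prod_encode (z, n)))" using assms(2) unfolding sig_def by blast
  let ?Q = "\<lambda>m. Q1 (prod_encode (pd1 (pd1 m), pd2 m)) \<and> Q2 (prod_encode (pd2 (pd1 m), pd2 m))"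
  have "prcB ?Q"
    by (intro prcB_conj prcB_comp[OF Q1(1)] prcB_comp[OF Q2(1)] prc_pe prc_fst prc_snd prc_id)
  moreover have "(P n \<and> R n) = (\<exists>z. ?Q (prod_encode (z, n)))" for n
  proof
    assume "P n \<and> R n"
    then obtain z1 z2 where "Q1 (prod_encode (z1, n))" "Q2 (prod_encode (z2, n))" using Q1 Q2 by blast
    then show "\<exists>z. ?Q (prod_encode (z, n))" by (intro exI[of _ "prod_encode (z1, z2)"]) simp
  next
    assume "\<exists>z. ?Q (prod_encode (z, n))"
    then show "P n \<and> R n" using Q1 Q2 by auto
  qed
  ultimately show ?thesis unfolding sig_def by blast
qed

lemma sig_disj:
  assumes "sig P" "sig R" shows "sig (\<lambda>n. P n \<or> R n)"
proof -
  obtain Q1 where Q1: "prcB Q1" "\<And>n. P n = (\<exists>z. Q1 (prod_encode (z, n)))" using assms(1) unfolding sig_def by blast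
  obtain Q2 where Q2: "prcB Q2" "\<And>n. R n = (\<exists>z. Q2 (prod_encode (z, n)))" using assms(2) unfolding sig_def by blast
  have "prcB (\<lambda>m. Q1 m \<or> Q2 m)" using Q1 Q2 by (intro prcB_disj)
  moreover have "(P n \<or> R n) = (\<exists>z. Q1 (prod_encode (z, n)) \<or> Q2 (prod_encode (z, n)))" for n
    using Q1 Q2 by blast
  ultimately show ?thesis unfolding sig_def by blast
qed

lemma sig_ex:
  assumes "sig (\<lambda>m. P (pd1 m) (pd2 m))" shows "sig (\<lambda>n. \<exists>y. P y n)"
proof -
  obtain Q where Q: "prcB Q" "\<And>m. P (pd1 m) (pd2 m) = (\<exists>z. Q (prod_encode (z, m)))"
    using assms unfolding sig_def by blast
  have Q': "P y n = (\<exists>z. Q (prod_encode (z, prod_encode (y, n))))" for y n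
    using Q(2)[of "prod_encode (y, n)"] by simp
  let ?Q = "\<lambda>m. Q (prod_encode (pd2 (pd1 m), prod_encode (pd1 (pd1 m), pd2 m)))"
  have "prcB ?Q" by (intro prcB_comp[OF Q(1)] prc_pe prc_fst prc_snd prc_id)
  moreover have "(\<exists>y. P y n) = (\<exists>z. ?Q (prod_encode (z, n)))" for n
  proof
    assume "\<exists>y. P y n"
    then obtain y z where "Q (prod_encode (z, prod_encode (y, n)))" using Q' by blast
    then show "\<exists>z. ?Q (prod_encode (z, n))" by (intro exI[of _ "prod_encode (y, z)"]) simp
  next
    assume "\<exists>z. ?Q (prod_encode (z, n))"
    then show "\<exists>y. P y n" using Q' by auto
  qed
  ultimately show ?thesis unfolding sig_def by blast
qed

lemma collect_bound:
  assumes "\<forall>i<b. \<exists>z::nat. R (i::nat) z"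
  shows "\<exists>W. \<forall>i<b. \<exists>z<W. R i z"
proof -
  obtain f where f: "\<forall>i<b. R i (f i)" using assms by metis
  have "\<forall>i<b. f i < Suc (\<Sum>j<b. f j)"
    using member_le_sum[of _ "{..<b}" f] by (simp add: le_imp_less_Suc)
  then show ?thesis using f by blast
qed

lemma sig_ball:
  assumes P: "sig (\<lambda>m. P (pd1 m) (pd2 m))" and B: "prc B"
  shows "sig (\<lambda>n. \<forall>i. i < B n \<longrightarrow> P i n)"
proof -
  obtain Q where Q: "prcB Q" "\<And>m. P (pd1 m) (pd2 m) = (\<exists>z. Q (prod_encode (z, m)))"
    using P unfolding sig_def by blast
  have Q': "P i n = (\<exists>z. Q (prod_encode (z, prod_encode (i, n))))" for i n
    using Q(2)[of "prod_encode (i, n)"] by simp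
  let ?Q = "\<lambda>m. \<forall>i. i < B (pd2 m) \<longrightarrow> (\<exists>z. z < pd1 m \<and> Q (prod_encode (z, prod_encode (i, pd2 m))))"
  have "prcB ?Q"
    apply (rule prcB_all_less)
     apply (rule prcB_ex_less)
      apply (rule prcB_comp[OF Q(1)])
      apply (intro prc_pe prc_fst prc_snd prc_id)
     apply (intro prc_fst prc_snd prc_id)
    apply (rule prc_comp[OF B], intro prc_snd prc_id)
    done
  moreover have "(\<forall>i. i < B n \<longrightarrow> P i n) = (\<exists>z. ?Q (prod_encode (z, n)))" for n
  proof
    assume "\<forall>i. i < B n \<longrightarrow> P i n"
    then have "\<forall>i<B n. \<exists>z. Q (prod_encode (z, prod_encode (i, n)))" using Q' by blast
    then obtain W where "\<forall>i<B n. \<exists>z<W. Q (prod_encode (z, prod_encode (i, n)))"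
      using collect_bound[of "B n" "\<lambda>i z. Q (prod_encode (z, prod_encode (i, n)))"] by blast
    then show "\<exists>z. ?Q (prod_encode (z, n))" by (intro exI[of _ W]) simp
  next
    assume "\<exists>z. ?Q (prod_encode (z, n))"
    then show "\<forall>i. i < B n \<longrightarrow> P i n" using Q' by auto
  qed
  ultimately show ?thesis unfolding sig_def by blast
qed

lemma sig_comp:
  assumes P: "sig P" and F: "prc F" shows "sig (\<lambda>n. P (F n))"
proof -
  obtain Q where Q: "prcB Q" "\<And>n. P n = (\<exists>z. Q (prod_encode (z, n)))" using P unfolding sig_def by blast
  have "prcB (\<lambda>m. Q (prod_encode (pd1 m, F (pd2 m))))"
    by (intro prcB_comp[OF Q(1)] prc_pe prc_fst prc_id prc_comp[OF F] prc_snd)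
  moreover have "P (F n) = (\<exists>z. Q (prod_encode (pd1 (prod_encode (z, n)), F (pd2 (prod_encode (z, n))))))" for n
    using Q(2) by simp
  ultimately show ?thesis unfolding sig_def by blast
qed

lemma sig_mem: "sig (\<lambda>n. n \<in> V) \<Longrightarrow> prc F \<Longrightarrow> sig (\<lambda>n. F n \<in> V)"
  by (rule sig_comp)

lemma sig_rel2:
  assumes "sig (\<lambda>m. R (pd1 m) (pd2 m))" "prc F" "prc G"
  shows "sig (\<lambda>n. R (F n) (G n))"
  using sig_comp[OF assms(1), of "\<lambda>n. prod_encode (F n, G n)"] assms(2,3) by (simp add: prc_pe)

lemma sig_rel3:
  assumes "sig (\<lambda>m. R (pd1 m) (pd1 (pd2 m)) (pd2 (pd2 m)))" "prc F" "prc G" "prc H"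
  shows "sig (\<lambda>n. R (F n) (G n) (H n))"
  using sig_comp[OF assms(1), of "\<lambda>n. prod_encode (F n, prod_encode (G n, H n))"] assms(2-4) by (simp add: prc_pe)

lemma sig_ce: assumes "sig P" shows "ce {n. P n}"
proof -
  obtain Q where Q: "prcB Q" "\<And>n. P n = (\<exists>z. Q (prod_encode (z, n)))" using assms unfolding sig_def by blast
  obtain tQ where tQ: "wf tQ 1" "\<And>og n. peval og tQ [n] = (if Q n then 1 else 0)"
    using Q(1) unfolding prcB_def prc_def by blast
  define tT where "tT = Cm tMonus [cst 1, Cm tQ [Cm tPe [Pj 0, Pj 1]]]"
  have wfT: "wf tT 2" using tQ by (simp add: tT_def numeral_2_eq_2)
  have evT: "peval og tT [z, n] = (if Q (prod_encode (z, n)) then 0 else 1)" for og z n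
    using tQ by (simp add: tT_def)
  define og0 where "og0 = (\<lambda>_::nat. 0::nat)"
  have chi: "chi {} = (\<lambda>a. Some (og0 a))" by (simp add: chi_def og0_def fun_eq_iff)
  have evc: "ev (chi {}) (code tT) [z, n] y \<longleftrightarrow> y = (if Q (prod_encode (z, n)) then 0 else 1)" for z n y
  proof -
    have "ev (chi {}) (code tT) [z, n] (peval og0 tT [z, n])"
      unfolding chi using compile[of tT "[z, n]" og0] wfT by (simp add: numeral_2_eq_2)
    then show ?thesis using ev_det evT by metis
  qed
  define e where "e = 7 * code tT + 5"
  have e: "e mod 7 = 5" "e div 7 = code tT" by (simp_all add: e_def)
  have "(\<exists>y. ev (chi {}) e [n] y) \<longleftrightarrow> P n" for n
  proof
    assume "\<exists>y. ev (chi {}) e [n] y"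
    then obtain y where "ev (chi {}) e [n] y" by blast
    then show "P n"
    proof cases
      case ev_mu
      then have "ev (chi {}) (code tT) [y, n] 0" using e by simp
      then have "Q (prod_encode (y, n))" using evc by (simp split: if_splits)
      then show ?thesis using Q(2) by blast
    qed (use e in simp_all)
  next
    assume "P n"
    then have ex: "\<exists>z. Q (prod_encode (z, n))" using Q(2) by blast
    define y where "y = (LEAST z. Q (prod_encode (z, n)))"
    have "Q (prod_encode (y, n))" using ex unfolding y_def by (rule LeastI_ex)
    moreover have "\<forall>m<y. \<not> Q (prod_encode (m, n))" unfolding y_def using not_less_Least by blast
    ultimately have "ev (chi {}) e [n] y"
      by - (rule ev.ev_mu, use e evc in auto)
    then show "\<exists>y. ev (chi {}) e [n] y" by blast
  qed
  then have "{n. P n} = {n. Phi (chi {}) e n \<noteq> None}" by (auto simp: Phi_def)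
  then show ?thesis unfolding ce_def by blast
qed


lemmas prc_intros = prc_const prc_id prc_add prc_minus prc_mult prc_pe prc_fst prc_snd prc_Suc
  prc_div prc_mod prc_pow prc_arg prc_length prc_tlc prc_hdc prc_if
lemmas prcB_intros = prcB_const prcB_eq prcB_le prcB_less prcB_not prcB_conj prcB_disj prcB_imp prcB_iff
  prcB_even prcB_odd prcB_mem prcB_all_less prcB_ex_less
lemmas sig_intros = sig_conj sig_disj sig_ex sig_ball sig_mem

lemma set_decode_less: "j \<in> set_decode w \<Longrightarrow> j < w"
proof -
  assume "j \<in> set_decode w"
  then have "odd (w div 2 ^ j)" by (simp add: set_decode_def)
  then have "w div 2 ^ j \<noteq> 0" by (metis even_zero)
  then have "2 ^ j \<le> w" by (simp add: div_eq_0_iff not_le)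
  moreover have "j < 2 ^ j" by (rule less_exp)
  ultimately show "j < w" by linarith
qed

inductive_set genI :: "(nat \<Rightarrow> nat \<Rightarrow> nat \<Rightarrow> bool) \<Rightarrow> nat set \<Rightarrow> nat set" for J Og where
  gI: "J x w u \<Longrightarrow> (\<forall>j\<in>set_decode w. j \<in> genI J Og) \<Longrightarrow> set_decode u \<subseteq> Og \<Longrightarrow> x \<in> genI J Og"

definition validL :: "(nat \<Rightarrow> nat \<Rightarrow> nat \<Rightarrow> bool) \<Rightarrow> nat list \<Rightarrow> nat \<Rightarrow> bool" where
  "validL J L U \<longleftrightarrow> (\<forall>i<length L. J (pd1 (arg i L)) (pd1 (pd2 (arg i L))) (pd2 (pd2 (arg i L)))
     \<and> (\<forall>j<pd1 (pd2 (arg i L)). j \<in> set_decode (pd1 (pd2 (arg i L))) \<longrightarrow> (\<exists>k<i. pd1 (arg k L) = j))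
     \<and> (\<forall>j<pd2 (pd2 (arg i L)). j \<in> set_decode (pd2 (pd2 (arg i L))) \<longrightarrow> j \<in> set_decode U))"

lemma arg_append: "arg i (L1 @ L2) = (if i < length L1 then arg i L1 else arg (i - length L1) L2)"
  by (auto simp: arg_def nth_append)

lemma validL_append:
  assumes "validL J L1 U" "validL J L2 U" shows "validL J (L1 @ L2) U"
  unfolding validL_def
proof (intro allI impI)
  fix i assume i: "i < length (L1 @ L2)"
  show "J (pd1 (arg i (L1 @ L2))) (pd1 (pd2 (arg i (L1 @ L2)))) (pd2 (pd2 (arg i (L1 @ L2)))) \<and>
         (\<forall>j<pd1 (pd2 (arg i (L1 @ L2))). j \<in> set_decode (pd1 (pd2 (arg i (L1 @ L2)))) \<longrightarrow> (\<exists>k<i. pd1 (arg k (L1 @ L2)) = j)) \<and>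
         (\<forall>j<pd2 (pd2 (arg i (L1 @ L2))). j \<in> set_decode (pd2 (pd2 (arg i (L1 @ L2)))) \<longrightarrow> j \<in> set_decode U)"
  proof (cases "i < length L1")
    case True
    have e: "\<forall>k<i. arg k (L1 @ L2) = arg k L1" using True by (simp add: arg_append)
    have a: "arg i (L1 @ L2) = arg i L1" using True by (simp add: arg_append)
    have ex: "(\<exists>k<i. pd1 (arg k (L1 @ L2)) = j) = (\<exists>k<i. pd1 (arg k L1) = j)" for j
      using e by auto
    show ?thesis unfolding a ex using assms(1) True unfolding validL_def by blast
  next
    case False
    define i' where "i' = i - length L1"
    have i': "i' < length L2" "i = i' + length L1" using i False by (auto simp: i'_def)
    have a: "arg i (L1 @ L2) = arg i' L2" using False by (simp add: arg_append i'_def)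
    have b: "arg (k + length L1) (L1 @ L2) = arg k L2" for k by (simp add: arg_append)
    have c: "\<exists>k<i. pd1 (arg k (L1 @ L2)) = j" if "\<exists>k<i'. pd1 (arg k L2) = j" for j
      using that b i'(2) by (metis add_less_cancel_right)
    show ?thesis using assms(2) i'(1) c unfolding validL_def a by blast
  qed
qed

lemma validL_mono: "validL J L U \<Longrightarrow> set_decode U \<subseteq> set_decode U' \<Longrightarrow> validL J L U'"
  unfolding validL_def by blast

lemma validL_Nil: "validL J [] U" by (simp add: validL_def)

lemma validL_snoc:
  assumes "validL J L U" "J x w u" "\<forall>j\<in>set_decode w. \<exists>k<length L. pd1 (arg k L) = j"
    "set_decode u \<subseteq> set_decode U"
  shows "validL J (L @ [prod_encode (x, prod_encode (w, u))]) U"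
proof -
  have "validL J [prod_encode (x, prod_encode (w, u))] 0 \<or> True" by simp
  show ?thesis unfolding validL_def
  proof (intro allI impI)
    fix i assume i: "i < length (L @ [prod_encode (x, prod_encode (w, u))])"
    show "J (pd1 (arg i (L @ [prod_encode (x, prod_encode (w, u))]))) (pd1 (pd2 (arg i (L @ [prod_encode (x, prod_encode (w, u))])))) (pd2 (pd2 (arg i (L @ [prod_encode (x, prod_encode (w, u))])))) \<and>
         (\<forall>j<pd1 (pd2 (arg i (L @ [prod_encode (x, prod_encode (w, u))]))). j \<in> set_decode (pd1 (pd2 (arg i (L @ [prod_encode (x, prod_encode (w, u))])))) \<longrightarrow> (\<exists>k<i. pd1 (arg k (L @ [prod_encode (x, prod_encode (w, u))])) = j)) \<and>
         (\<forall>j<pd2 (pd2 (arg i (L @ [prod_encode (x, prod_encode (w, u))]))). j \<in> set_decode (pd2 (pd2 (arg i (L @ [prod_encode (x, prod_encode (w, u))])))) \<longrightarrow> j \<in> set_decode U)"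
    proof (cases "i < length L")
      case True
      have e: "\<forall>k<i. arg k (L @ [prod_encode (x, prod_encode (w, u))]) = arg k L" using True by (simp add: arg_append)
      have a: "arg i (L @ [prod_encode (x, prod_encode (w, u))]) = arg i L" using True by (simp add: arg_append)
      have ex: "(\<exists>k<i. pd1 (arg k (L @ [prod_encode (x, prod_encode (w, u))])) = j) = (\<exists>k<i. pd1 (arg k L) = j)" for j
        using e by auto
      show ?thesis unfolding a ex using assms(1) True unfolding validL_def by blast
    next
      case False
      then have ii: "i = length L" using i by simp
      have "\<forall>k<i. arg k (L @ [prod_encode (x, prod_encode (w, u))]) = arg k L" using ii by (simp add: arg_append)
      then show ?thesis using assms(2-4) ii by (auto simp: arg_append)
    qed
  qed
qed

lemma validL_sound:
  assumes "validL J L U" "set_decode U \<subseteq> Og"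
  shows "i < length L \<Longrightarrow> pd1 (arg i L) \<in> genI J Og"
proof (induction i rule: less_induct)
  case (less i)
  let ?t = "arg i L"
  have v: "J (pd1 ?t) (pd1 (pd2 ?t)) (pd2 (pd2 ?t))"
    "\<forall>j<pd1 (pd2 ?t). j \<in> set_decode (pd1 (pd2 ?t)) \<longrightarrow> (\<exists>k<i. pd1 (arg k L) = j)"
    "\<forall>j<pd2 (pd2 ?t). j \<in> set_decode (pd2 (pd2 ?t)) \<longrightarrow> j \<in> set_decode U"
    using assms(1) less.prems unfolding validL_def by blast+
  show ?case
  proof (rule gI[of J "pd1 ?t" "pd1 (pd2 ?t)" "pd2 (pd2 ?t)", OF v(1)])
    show "\<forall>j\<in>set_decode (pd1 (pd2 ?t)). j \<in> genI J Og"
    proof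
      fix j assume j: "j \<in> set_decode (pd1 (pd2 ?t))"
      then obtain k where k: "k < i" "pd1 (arg k L) = j" using v(2) set_decode_less by blast
      have "k < length L" using k(1) less.prems by simp
      then show "j \<in> genI J Og" using less.IH[OF k(1)] k(2) by simp
    qed
    show "set_decode (pd2 (pd2 ?t)) \<subseteq> Og" using v(3) assms(2) set_decode_less by blast
  qed
qed

lemma set_decode_union: "\<exists>U. set_decode U = set_decode U1 \<union> set_decode U2"
  by (rule exI[of _ "set_encode (set_decode U1 \<union> set_decode U2)"])
    (rule set_encode_inverse, rule finite_UnI; rule finite_set_decode)

lemma genI_complete:
  assumes "x \<in> genI J Og"
  shows "\<exists>L U. validL J L U \<and> set_decode U \<subseteq> Og \<and> (\<exists>k<length L. pd1 (arg k L) = x)"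
  using assms
proof (induction rule: genI.induct)
  case (gI x w u)
  have fin_comb: "\<exists>L U. validL J L U \<and> set_decode U \<subseteq> Og \<and> (\<forall>j\<in>F. \<exists>k<length L. pd1 (arg k L) = j)"
    if "finite F" "F \<subseteq> set_decode w" for F
    using that
  proof (induction F rule: finite_induct)
    case empty
    then show ?case using validL_Nil[of J 0] by (intro exI[of _ "[]"] exI[of _ 0]) simp
  next
    case (insert j F)
    then obtain L1 U1 where h1: "validL J L1 U1" "set_decode U1 \<subseteq> Og" "\<forall>j\<in>F. \<exists>k<length L1. pd1 (arg k L1) = j"
      by blast
    obtain L2 U2 where h2: "validL J L2 U2" "set_decode U2 \<subseteq> Og" "\<exists>k<length L2. pd1 (arg k L2) = j"
      using gI.IH insert.prems by blast
    obtain U where U: "set_decode U = set_decode U1 \<union> set_decode U2" using set_decode_union by blast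
    have "validL J L1 U" by (rule validL_mono[OF h1(1)]) (simp add: U)
    moreover have "validL J L2 U" by (rule validL_mono[OF h2(1)]) (simp add: U)
    ultimately have "validL J (L1 @ L2) U" by (rule validL_append)
    moreover have "set_decode U \<subseteq> Og" using U h1 h2 by auto
    moreover have "\<forall>j'\<in>insert j F. \<exists>k<length (L1 @ L2). pd1 (arg k (L1 @ L2)) = j'"
    proof
      fix j' assume "j' \<in> insert j F"
      then show "\<exists>k<length (L1 @ L2). pd1 (arg k (L1 @ L2)) = j'"
      proof
        assume "j' = j"
        then obtain k where "k < length L2" "pd1 (arg k L2) = j'" using h2 by blast
        then show ?thesis by (intro exI[of _ "k + length L1"]) (simp add: arg_append)
      next
        assume "j' \<in> F"
        then obtain k where "k < length L1" "pd1 (arg k L1) = j'" using h1 by blast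
        then show ?thesis by (intro exI[of _ k]) (simp add: arg_append)
      qed
    qed
    ultimately show ?case by blast
  qed
  obtain L U where h: "validL J L U" "set_decode U \<subseteq> Og" "\<forall>j\<in>set_decode w. \<exists>k<length L. pd1 (arg k L) = j"
    using fin_comb[OF finite_set_decode subset_refl] by blast
  obtain U' where U': "set_decode U' = set_decode U \<union> set_decode u" using set_decode_union by blast
  have vU': "validL J L U'" by (rule validL_mono[OF h(1)]) (simp add: U')
  have "validL J (L @ [prod_encode (x, prod_encode (w, u))]) U'"
    by (rule validL_snoc[OF vU' gI.hyps(1) h(3)]) (simp add: U')
  moreover have "set_decode U' \<subseteq> Og" using U' h gI.hyps by auto
  moreover have "\<exists>k<length (L @ [prod_encode (x, prod_encode (w, u))]). pd1 (arg k (L @ [prod_encode (x, prod_encode (w, u))])) = x"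
    by (intro exI[of _ "length L"]) (simp add: arg_append)
  ultimately show ?case by blast
qed

lemma genI_sig:
  assumes J: "sig (\<lambda>m. J (pd1 m) (pd1 (pd2 m)) (pd2 (pd2 m)))"
  shows "\<exists>Z. sig (\<lambda>m. m \<in> Z) \<and> (\<forall>Og. genI J Og = {x. \<exists>u. prod_encode (x, u) \<in> Z \<and> set_decode u \<subseteq> Og})"
proof -
  define Z where "Z = {m. \<exists>c. validL J (list_decode c) (pd2 m) \<and> (\<exists>k<length (list_decode c). pd1 (arg k (list_decode c)) = pd1 m)}"
  have "sig (\<lambda>m. m \<in> Z)"
    unfolding Z_def mem_Collect_eq validL_def
    by (intro sig_intros sig_rel3[OF J] sig_prcB prcB_intros prc_intros)
  moreover have "genI J Og = {x. \<exists>u. prod_encode (x, u) \<in> Z \<and> set_decode u \<subseteq> Og}" for Og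
  proof (intro set_eqI iffI)
    fix x assume "x \<in> genI J Og"
    then obtain L U where L: "validL J L U" "set_decode U \<subseteq> Og" "\<exists>k<length L. pd1 (arg k L) = x"
      using genI_complete by blast
    have "prod_encode (x, U) \<in> Z" unfolding Z_def mem_Collect_eq
      using L by (intro exI[of _ "list_encode L"]) simp
    then show "x \<in> {x. \<exists>u. prod_encode (x, u) \<in> Z \<and> set_decode u \<subseteq> Og}" using L by blast
  next
    fix x assume "x \<in> {x. \<exists>u. prod_encode (x, u) \<in> Z \<and> set_decode u \<subseteq> Og}"
    then obtain U c k where "validL J (list_decode c) U" "set_decode U \<subseteq> Og" "k < length (list_decode c)"
      "pd1 (arg k (list_decode c)) = x" unfolding Z_def by auto
    then show "x \<in> genI J Og" using validL_sound by metis
  qed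
  ultimately show ?thesis by blast
qed


definition Bapp0 :: "(nat \<Rightarrow> nat option) \<Rightarrow> (nat \<Rightarrow> nat option) \<Rightarrow> nat \<Rightarrow> nat option" where
  "Bapp0 \<phi> \<psi> = (\<lambda>n. case \<phi> 0 of None \<Rightarrow> None | Some e \<Rightarrow> Phi (pjoin \<phi> \<psi>) e n)"

lemma Bapp_eq: "Bapp \<phi> \<psi> = Some (Bapp0 \<phi> \<psi>)"
  by (simp add: Bapp_def Bapp0_def)

definition tbl :: "nat \<Rightarrow> nat \<Rightarrow> nat option" where
  "tbl u = (\<lambda>a. if \<exists>b. prod_encode (prod_encode (a, b), 1) \<in> set_decode u
      then Some (LEAST b. prod_encode (prod_encode (a, b), 1) \<in> set_decode u) else None)"

definition tblrel :: "nat \<Rightarrow> nat \<Rightarrow> nat \<Rightarrow> bool" where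
  "tblrel u a y \<longleftrightarrow> prod_encode (prod_encode (a, y), 1) \<in> set_decode u \<and>
      (\<forall>b<y. prod_encode (prod_encode (a, b), 1) \<notin> set_decode u)"

lemma tblrel_iff: "tblrel u a y \<longleftrightarrow> tbl u a = Some y"
proof
  assume "tblrel u a y"
  then show "tbl u a = Some y" unfolding tblrel_def tbl_def
    by (auto intro!: Least_equality simp: not_less[symmetric])
next
  assume "tbl u a = Some y"
  then show "tblrel u a y" unfolding tblrel_def tbl_def
    by (auto split: if_splits intro: LeastI dest: not_less_Least)
qed

fun App :: "(nat \<Rightarrow> nat option) \<Rightarrow> nat list \<Rightarrow> nat \<Rightarrow> nat option" where
  "App \<phi> [] = \<phi>"
| "App \<phi> (u # us) = Bapp0 (App \<phi> us) (tbl u)"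

lemma pd1_less: "c \<noteq> 0 \<Longrightarrow> pd1 c < c"
proof -
  assume "c \<noteq> 0"
  obtain a b where ab: "prod_decode c = (a, b)" by (cases "prod_decode c")
  then have c: "c = prod_encode (a, b)" by (metis prod_decode_inverse)
  show ?thesis
  proof (cases "a = 0")
    case True then show ?thesis using ab \<open>c \<noteq> 0\<close> by simp
  next
    case False
    then have "1 \<le> triangle (a + b)" by (cases "a + b") auto
    then show ?thesis using ab c by (simp add: prod_encode_def)
  qed
qed

function memf :: "(nat \<Rightarrow> nat option) \<Rightarrow> nat \<Rightarrow> bool" where
  "memf \<chi> c = (if c = 0 then False
     else if pd2 c = 1 then \<chi> (pd1 (pd1 c)) = Some (pd2 (pd1 c))
     else if even (pd2 c) then memf (Bapp0 \<chi> (tbl (pd2 c))) (pd1 c) else False)"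
  by auto
termination
  by (relation "measure snd") (auto intro: pd1_less)

declare memf.simps[simp del]

lemma memf_pe: "memf \<chi> (prod_encode (n, u)) = (prod_encode (n, u) \<noteq> 0 \<and>
   (if u = 1 then \<chi> (pd1 n) = Some (pd2 n) else (even u \<and> memf (Bapp0 \<chi> (tbl u)) n)))"
  by (subst memf.simps) auto

lemma memf_0[simp]: "\<not> memf \<chi> 0"
  by (subst memf.simps) simp

definition "cons_c x l = Suc (prod_encode (x, l))"
definition "evf d e xs y = prod_encode (0, prod_encode (d, prod_encode (e, prod_encode (xs, y))))"
definition "af s a b = prod_encode (1, prod_encode (s, prod_encode (a, b)))"
definition "mf s c = prod_encode (2, prod_encode (s, c))"

lemma list_decode_cons_c[simp]: "list_decode (cons_c x l) = x # list_decode l"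
  by (simp add: cons_c_def)

lemma list_encode_Cons: "list_encode (x # xs) = cons_c x (list_encode xs)"
  by (simp add: cons_c_def)

definition OrcOK :: "nat \<Rightarrow> nat \<Rightarrow> nat \<Rightarrow> nat \<Rightarrow> nat \<Rightarrow> bool" where
  "OrcOK d q y w u \<longleftrightarrow>
     (d = 0 \<and> ((y = 1 \<and> 2 * q \<in> set_decode u) \<or> (y = 0 \<and> 2 * q + 1 \<in> set_decode u))) \<or>
     (\<exists>uu s. d = Suc (cons_c uu s) \<and> ((even q \<and> af s (q div 2) y \<in> set_decode w) \<or> (odd q \<and> tblrel uu (q div 2) y)))"

definition EvRule :: "nat \<Rightarrow> nat \<Rightarrow> nat \<Rightarrow> nat \<Rightarrow> nat \<Rightarrow> nat \<Rightarrow> bool" where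
  "EvRule d e xs y w u \<longleftrightarrow>
     (e mod 7 = 0 \<and> y = 0) \<or>
     (e mod 7 = 1 \<and> y = Suc (arg 0 (list_decode xs))) \<or>
     (e mod 7 = 2 \<and> y = arg (e div 7) (list_decode xs)) \<or>
     (e mod 7 = 3 \<and> (\<exists>ys. length (list_decode ys) = length (list_decode (pd2 (e div 7))) \<and>
         (\<forall>j<length (list_decode ys). evf d (arg j (list_decode (pd2 (e div 7)))) xs (arg j (list_decode ys)) \<in> set_decode w) \<and>
         evf d (pd1 (e div 7)) ys y \<in> set_decode w)) \<or>
     (e mod 7 = 4 \<and> (\<exists>xs'. xs = cons_c 0 xs' \<and> evf d (pd1 (e div 7)) xs' y \<in> set_decode w)) \<or>
     (e mod 7 = 4 \<and> (\<exists>n xs' y'. xs = cons_c (Suc n) xs' \<and> evf d e (cons_c n xs') y' \<in> set_decode w \<and>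
         evf d (pd2 (e div 7)) (cons_c n (cons_c y' xs')) y \<in> set_decode w)) \<or>
     (e mod 7 = 5 \<and> evf d (e div 7) (cons_c y xs) 0 \<in> set_decode w \<and>
         (\<forall>m<y. \<exists>z. z \<noteq> 0 \<and> evf d (e div 7) (cons_c m xs) z \<in> set_decode w)) \<or>
     (e mod 7 = 6 \<and> OrcOK d (arg 0 (list_decode xs)) y w u)"

definition JF :: "nat \<Rightarrow> nat \<Rightarrow> nat \<Rightarrow> nat \<Rightarrow> bool" where
  "JF e0 x w u \<longleftrightarrow>
     (\<exists>d e xs y. x = evf d e xs y \<and> EvRule d e xs y w u) \<or>
     (\<exists>a b. x = af 0 a b \<and> evf 0 e0 (cons_c a 0) b \<in> set_decode w) \<or>
     (\<exists>uu s a b e. x = af (cons_c uu s) a b \<and> af s 0 e \<in> set_decode w \<and>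
        evf (Suc (cons_c uu s)) e (cons_c a 0) b \<in> set_decode w) \<or>
     (\<exists>s a b. x = mf s (prod_encode (prod_encode (a, b), 1)) \<and> af s a b \<in> set_decode w) \<or>
     (\<exists>s n uu. x = mf s (prod_encode (n, uu)) \<and> even uu \<and> prod_encode (n, uu) \<noteq> 0 \<and>
        mf (cons_c uu s) n \<in> set_decode w)"

lemma JF_sig: "sig (\<lambda>m. JF e0 (pd1 m) (pd1 (pd2 m)) (pd2 (pd2 m)))"
  unfolding JF_def EvRule_def OrcOK_def tblrel_def evf_def af_def mf_def cons_c_def
  by (intro sig_intros sig_prcB prcB_intros prc_intros)


definition orc :: "nat set \<Rightarrow> (nat \<Rightarrow> nat option) \<Rightarrow> nat \<Rightarrow> nat \<Rightarrow> nat option" where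
  "orc X \<phi> d = (if d = 0 then chi X else pjoin (App \<phi> (list_decode (pd2 (d - 2)))) (tbl (pd1 (d - 2))))"

lemma orc_0[simp]: "orc X \<phi> 0 = chi X" by (simp add: orc_def)
lemma orc_cons[simp]: "orc X \<phi> (Suc (cons_c uu s)) = pjoin (App \<phi> (list_decode s)) (tbl uu)"
  by (simp add: orc_def cons_c_def)

definition Sem :: "nat set \<Rightarrow> nat \<Rightarrow> nat \<Rightarrow> bool" where
  "Sem X e0 x = (let \<phi> = Phi (chi X) e0; t = pd1 x; r = pd2 x in
     if t = 0 then ev (orc X \<phi> (pd1 r)) (pd1 (pd2 r)) (list_decode (pd1 (pd2 (pd2 r)))) (pd2 (pd2 (pd2 r)))
     else if t = 1 then App \<phi> (list_decode (pd1 r)) (pd1 (pd2 r)) = Some (pd2 (pd2 r))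
     else if t = 2 then memf (App \<phi> (list_decode (pd1 r))) (pd2 r) else False)"

lemma Sem_evf[simp]: "Sem X e0 (evf d e xs y) = ev (orc X (Phi (chi X) e0) d) e (list_decode xs) y"
  by (simp add: Sem_def evf_def)
lemma Sem_af[simp]: "Sem X e0 (af s a b) = (App (Phi (chi X) e0) (list_decode s) a = Some b)"
  by (simp add: Sem_def af_def)
lemma Sem_mf[simp]: "Sem X e0 (mf s c) = memf (App (Phi (chi X) e0) (list_decode s)) c"
  by (simp add: Sem_def mf_def)

lemma Phi_Some: "Phi f e n = Some y \<longleftrightarrow> ev f e [n] y"
proof
  assume "Phi f e n = Some y"
  then show "ev f e [n] y" unfolding Phi_def
    by (auto split: if_splits intro: theI ev_det)
next
  assume "ev f e [n] y"
  then show "Phi f e n = Some y" unfolding Phi_def using ev_det by (metis (mono_tags, lifting) the_equality)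
qed

lemma join_even: "2 * q \<in> join_compl X \<longleftrightarrow> q \<in> X"
  by (auto simp: join_compl_def) presburger+
lemma join_odd: "2 * q + 1 \<in> join_compl X \<longleftrightarrow> q \<notin> X"
  by (auto simp: join_compl_def) presburger+

lemma pjoin_even: "even q \<Longrightarrow> pjoin \<phi> \<psi> q = \<phi> (q div 2)" by (simp add: pjoin_def)
lemma pjoin_odd: "odd q \<Longrightarrow> pjoin \<phi> \<psi> q = \<psi> (q div 2)" by (simp add: pjoin_def)

lemma prod_decode_split: "prod_decode c = (pd1 c, pd2 c)" by simp

lemma EvRule_sound:
  assumes R: "EvRule d e xs y w u"
    and W: "\<And>j. j \<in> set_decode w \<Longrightarrow> Sem X e0 j"
    and U: "set_decode u \<subseteq> join_compl X"
  shows "ev (orc X (Phi (chi X) e0) d) e (list_decode xs) y"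
proof -
  let ?g = "orc X (Phi (chi X) e0) d"
  from R show ?thesis unfolding EvRule_def
  proof (elim disjE conjE exE)
    assume "e mod 7 = 0" "y = 0" then show ?thesis by (simp add: ev.ev_zero)
  next
    assume "e mod 7 = 1" "y = Suc (arg 0 (list_decode xs))" then show ?thesis by (simp add: ev.ev_suc)
  next
    assume "e mod 7 = 2" "y = arg (e div 7) (list_decode xs)" then show ?thesis by (simp add: ev.ev_proj)
  next
    fix ys
    assume h: "e mod 7 = 3" "length (list_decode ys) = length (list_decode (pd2 (e div 7)))"
      "\<forall>j<length (list_decode ys). evf d (arg j (list_decode (pd2 (e div 7)))) xs (arg j (list_decode ys)) \<in> set_decode w"
      "evf d (pd1 (e div 7)) ys y \<in> set_decode w"
    have "list_all2 (\<lambda>q y. ev ?g q (list_decode xs) y) (list_decode (pd2 (e div 7))) (list_decode ys)"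
      unfolding list_all2_conv_all_nth
    proof (intro conjI allI impI)
      fix j assume j: "j < length (list_decode (pd2 (e div 7)))"
      then have "evf d (arg j (list_decode (pd2 (e div 7)))) xs (arg j (list_decode ys)) \<in> set_decode w"
        using h(2,3) by simp
      then have "Sem X e0 (evf d (arg j (list_decode (pd2 (e div 7)))) xs (arg j (list_decode ys)))"
        by (rule W)
      then show "ev ?g (list_decode (pd2 (e div 7)) ! j) (list_decode xs) (list_decode ys ! j)"
        using j h(2) by (simp add: arg_def)
    qed (use h in simp)
    moreover have "ev ?g (pd1 (e div 7)) (list_decode ys) y" using W[OF h(4)] by simp
    ultimately show ?thesis
      by - (rule ev.ev_comp[OF h(1) prod_decode_split], assumption+)
  next
    fix xs'
    assume h: "e mod 7 = 4" "xs = cons_c 0 xs'" "evf d (pd1 (e div 7)) xs' y \<in> set_decode w"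
    have "ev ?g (pd1 (e div 7)) (list_decode xs') y" using W[OF h(3)] by simp
    then show ?thesis using h(2) by (simp add: ev.ev_pr0[OF h(1) prod_decode_split])
  next
    fix n xs' y'
    assume h: "e mod 7 = 4" "xs = cons_c (Suc n) xs'" "evf d e (cons_c n xs') y' \<in> set_decode w"
       "evf d (pd2 (e div 7)) (cons_c n (cons_c y' xs')) y \<in> set_decode w"
    have a: "ev ?g e (n # list_decode xs') y'" using W[OF h(3)] by simp
    have b: "ev ?g (pd2 (e div 7)) (n # y' # list_decode xs') y" using W[OF h(4)] by simp
    show ?thesis using h(2) ev.ev_prS[OF h(1) prod_decode_split a b] by simp
  next
    assume h: "e mod 7 = 5" "evf d (e div 7) (cons_c y xs) 0 \<in> set_decode w"
      "\<forall>m<y. \<exists>z. z \<noteq> 0 \<and> evf d (e div 7) (cons_c m xs) z \<in> set_decode w"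
    have a: "ev ?g (e div 7) (y # list_decode xs) 0" using W[OF h(2)] by simp
    have b: "\<forall>m<y. \<exists>z. z \<noteq> 0 \<and> ev ?g (e div 7) (m # list_decode xs) z"
    proof (intro allI impI)
      fix m assume "m < y"
      then obtain z where "z \<noteq> 0" "evf d (e div 7) (cons_c m xs) z \<in> set_decode w" using h(3) by blast
      then show "\<exists>z. z \<noteq> 0 \<and> ev ?g (e div 7) (m # list_decode xs) z" using W by fastforce
    qed
    show ?thesis by (rule ev.ev_mu[OF h(1) a b])
  next
    assume h: "e mod 7 = 6" "OrcOK d (arg 0 (list_decode xs)) y w u"
    let ?q = "arg 0 (list_decode xs)"
    have "?g ?q = Some y" using h(2) unfolding OrcOK_def
    proof (elim disjE conjE exE)
      assume a: "d = 0" "y = 1" "2 * ?q \<in> set_decode u"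
      then have "2 * ?q \<in> join_compl X" using U by blast
      then have "?q \<in> X" using join_even by blast
      then show ?thesis using a by (simp add: chi_def)
    next
      assume a: "d = 0" "y = 0" "2 * ?q + 1 \<in> set_decode u"
      then have "2 * ?q + 1 \<in> join_compl X" using U by blast
      then have "?q \<notin> X" using join_odd by blast
      then show ?thesis using a by (simp add: chi_def)
    next
      fix uu s assume "d = Suc (cons_c uu s)" "even ?q" "af s (?q div 2) y \<in> set_decode w"
      then show ?thesis using W by (fastforce simp: pjoin_even)
    next
      fix uu s assume "d = Suc (cons_c uu s)" "odd ?q" "tblrel uu (?q div 2) y"
      then show ?thesis by (simp add: pjoin_odd tblrel_iff)
    qed
    then show ?thesis by (rule ev.ev_oracle[OF h(1)])
  qed
qed


lemma prod_encode_eq_0[simp]: "prod_encode (a, b) = 0 \<longleftrightarrow> a = 0 \<and> b = 0"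
proof -
  have "prod_encode (0, 0) = 0" by (simp add: prod_encode_def)
  then show ?thesis by (metis prod_encode_eq prod.inject)
qed

lemma Fct_sound:
  assumes "x \<in> genI (JF e0) (join_compl X)"
  shows "Sem X e0 x"
  using assms
proof (induction rule: genI.induct)
  case (gI x w u)
  have W: "\<And>j. j \<in> set_decode w \<Longrightarrow> Sem X e0 j" using gI.IH by blast
  let ?\<phi> = "Phi (chi X) e0"
  from gI.hyps(1) show ?case unfolding JF_def
  proof (elim disjE conjE exE)
    fix d e xs y assume "x = evf d e xs y" "EvRule d e xs y w u"
    then show ?thesis using EvRule_sound[OF _ W gI.hyps(2)] by simp
  next
    fix a b assume h: "x = af 0 a b" "evf 0 e0 (cons_c a 0) b \<in> set_decode w"
    have "ev (chi X) e0 [a] b" using W[OF h(2)] by simp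
    then show ?thesis using h(1) by (simp add: Phi_Some)
  next
    fix uu s a b e assume h: "x = af (cons_c uu s) a b" "af s 0 e \<in> set_decode w"
      "evf (Suc (cons_c uu s)) e (cons_c a 0) b \<in> set_decode w"
    have e: "App ?\<phi> (list_decode s) 0 = Some e" using W[OF h(2)] by simp
    have "ev (pjoin (App ?\<phi> (list_decode s)) (tbl uu)) e [a] b" using W[OF h(3)] by simp
    then show ?thesis using h(1) e by (simp add: Bapp0_def Phi_Some)
  next
    fix s a b assume h: "x = mf s (prod_encode (prod_encode (a, b), 1))" "af s a b \<in> set_decode w"
    have "App ?\<phi> (list_decode s) a = Some b" using W[OF h(2)] by simp
    then show ?thesis using h(1) by (simp add: memf_pe)
  next
    fix s n uu assume h: "x = mf s (prod_encode (n, uu))" "even uu" "prod_encode (n, uu) \<noteq> 0"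
      "mf (cons_c uu s) n \<in> set_decode w"
    have "memf (Bapp0 (App ?\<phi> (list_decode s)) (tbl uu)) n" using W[OF h(4)] by simp
    moreover have "uu \<noteq> 1" using h(2) by auto
    ultimately show ?thesis using h by (simp add: memf_pe)
  qed
qed


definition senc :: "nat set \<Rightarrow> nat" where "senc F = set_encode F"
lemma code_set[simp]: "finite F \<Longrightarrow> set_decode (senc F) = F" by (simp add: senc_def)

lemma EvRule_intro:
  assumes "EvRule d e xs y w u" "set_decode w \<subseteq> genI (JF e0) Og" "set_decode u \<subseteq> Og"
  shows "evf d e xs y \<in> genI (JF e0) Og"
proof (rule gI[of _ _ w u])
  show "JF e0 (evf d e xs y) w u" unfolding JF_def using assms(1) by blast
qed (use assms in auto)

lemma gI': "JF e0 x w u \<Longrightarrow> set_decode w \<subseteq> genI (JF e0) Og \<Longrightarrow> set_decode u \<subseteq> Og \<Longrightarrow> x \<in> genI (JF e0) Og"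
  by (rule gI) auto

lemma ev_fct:
  assumes "ev g e xs y"
    and orc: "\<forall>q z. g q = Some z \<longrightarrow> (\<exists>w u. OrcOK d q z w u \<and> set_decode w \<subseteq> genI (JF e0) Og \<and> set_decode u \<subseteq> Og)"
  shows "evf d e (list_encode xs) y \<in> genI (JF e0) Og"
  using assms(1)
proof (induction rule: ev.induct)
  case (ev_zero e xs)
  show ?case by (rule EvRule_intro[of _ _ _ _ 0 0]) (use ev_zero in \<open>auto simp: EvRule_def\<close>)
next
  case (ev_suc e xs)
  show ?case by (rule EvRule_intro[of _ _ _ _ 0 0]) (use ev_suc in \<open>auto simp: EvRule_def\<close>)
next
  case (ev_proj e xs)
  show ?case by (rule EvRule_intro[of _ _ _ _ 0 0]) (use ev_proj in \<open>auto simp: EvRule_def\<close>)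
next
  case (ev_comp e p qc xs ys z)
  define F where "F = insert (evf d p (list_encode ys) z)
     ((\<lambda>j. evf d (list_decode qc ! j) (list_encode xs) (ys ! j)) ` {..<length ys})"
  have len: "length ys = length (list_decode qc)" using ev_comp.IH(1) by (simp add: list_all2_lengthD)
  have pq: "pd1 (e div 7) = p" "pd2 (e div 7) = qc" using ev_comp.hyps(2) by simp_all
  have "F \<subseteq> genI (JF e0) Og"
  proof -
    have "\<forall>j<length ys. evf d (list_decode qc ! j) (list_encode xs) (ys ! j) \<in> genI (JF e0) Og"
      using ev_comp.IH(1) len by (auto simp: list_all2_conv_all_nth)
    then show ?thesis using ev_comp.IH(2) by (auto simp: F_def)
  qed
  moreover have "EvRule d e (list_encode xs) z (senc F) 0"
  proof -
    have "\<forall>j<length ys. evf d (arg j (list_decode qc)) (list_encode xs) (arg j ys) \<in> F"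
      using len by (auto simp: F_def arg_def)
    then have "e mod 7 = 3 \<and> (\<exists>ys'. length (list_decode ys') = length (list_decode (pd2 (e div 7))) \<and>
         (\<forall>j<length (list_decode ys'). evf d (arg j (list_decode (pd2 (e div 7)))) (list_encode xs) (arg j (list_decode ys')) \<in> set_decode (senc F)) \<and>
         evf d (pd1 (e div 7)) ys' z \<in> set_decode (senc F))"
      using ev_comp.hyps(1) pq len by (intro conjI exI[of _ "list_encode ys"]) (auto simp: F_def)
    then show ?thesis unfolding EvRule_def by blast
  qed
  moreover have "finite F" by (simp add: F_def)
  ultimately show ?case by (intro EvRule_intro[of _ _ _ _ "senc F" 0]) auto
next
  case (ev_pr0 e p q xs y)
  have "e mod 7 = 4 \<and> (\<exists>xs'. list_encode (0 # xs) = cons_c 0 xs' \<and> evf d (pd1 (e div 7)) xs' y \<in> set_decode (senc {evf d p (list_encode xs) y}))"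
    using ev_pr0.hyps(1,2) by (intro conjI exI[of _ "list_encode xs"]) (simp_all add: cons_c_def)
  then have "EvRule d e (list_encode (0 # xs)) y (senc {evf d p (list_encode xs) y}) 0"
    unfolding EvRule_def by blast
  then show ?case using ev_pr0.IH by (intro EvRule_intro) auto
next
  case (ev_prS e p q n xs y z)
  let ?W = "senc {evf d e (cons_c n (list_encode xs)) y, evf d q (cons_c n (cons_c y (list_encode xs))) z}"
  have "e mod 7 = 4 \<and> (\<exists>n' xs' y'. list_encode (Suc n # xs) = cons_c (Suc n') xs' \<and> evf d e (cons_c n' xs') y' \<in> set_decode ?W \<and>
         evf d (pd2 (e div 7)) (cons_c n' (cons_c y' xs')) z \<in> set_decode ?W)"
    using ev_prS.hyps(1,2) by (intro conjI exI[of _ n] exI[of _ "list_encode xs"] exI[of _ y]) (simp_all add: cons_c_def)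
  then have "EvRule d e (list_encode (Suc n # xs)) z ?W 0"
    unfolding EvRule_def by blast
  then show ?case using ev_prS.IH by (intro EvRule_intro) (auto simp: cons_c_def)
next
  case (ev_mu e n xs)
  have "\<forall>m\<in>{..<n}. \<exists>z. z \<noteq> 0 \<and> evf d (e div 7) (list_encode (m # xs)) z \<in> genI (JF e0) Og"
    using ev_mu.IH(2) by blast
  then obtain Zf where Zf: "\<forall>m\<in>{..<n}. Zf m \<noteq> 0 \<and> evf d (e div 7) (list_encode (m # xs)) (Zf m) \<in> genI (JF e0) Og"
    by (rule bchoice[elim_format]) blast
  define F where "F = insert (evf d (e div 7) (cons_c n (list_encode xs)) 0)
     ((\<lambda>m. evf d (e div 7) (cons_c m (list_encode xs)) (Zf m)) ` {..<n})"
  have "F \<subseteq> genI (JF e0) Og" using Zf ev_mu.IH(1) by (auto simp: F_def cons_c_def)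
  moreover have "EvRule d e (list_encode xs) n (senc F) 0"
  proof -
    have "\<forall>m<n. \<exists>z. z \<noteq> 0 \<and> evf d (e div 7) (cons_c m (list_encode xs)) z \<in> F"
      using Zf by (auto simp: F_def)
    then show ?thesis unfolding EvRule_def using ev_mu.hyps(1) by (auto simp: F_def)
  qed
  moreover have "finite F" by (simp add: F_def)
  ultimately show ?case by (intro EvRule_intro[of _ _ _ _ "senc F" 0]) auto
next
  case (ev_oracle e xs y)
  obtain w u where "OrcOK d (arg 0 xs) y w u" "set_decode w \<subseteq> genI (JF e0) Og" "set_decode u \<subseteq> Og"
    using orc ev_oracle.hyps(2) by blast
  then show ?case using ev_oracle.hyps(1) by (intro EvRule_intro[of _ _ _ _ w u]) (auto simp: EvRule_def)
qed


lemma JF_af0: "evf 0 e0 (cons_c a 0) b \<in> set_decode w \<Longrightarrow> JF e0 (af 0 a b) w u"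
  unfolding JF_def by blast
lemma JF_afc: "af s 0 e \<in> set_decode w \<Longrightarrow> evf (Suc (cons_c uu s)) e (cons_c a 0) b \<in> set_decode w \<Longrightarrow> JF e0 (af (cons_c uu s) a b) w u"
  unfolding JF_def by blast
lemma JF_mf1: "af s a b \<in> set_decode w \<Longrightarrow> JF e0 (mf s (prod_encode (prod_encode (a, b), 1))) w u"
  unfolding JF_def by blast
lemma JF_mf2: "even uu \<Longrightarrow> prod_encode (n, uu) \<noteq> 0 \<Longrightarrow> mf (cons_c uu s) n \<in> set_decode w \<Longrightarrow> JF e0 (mf s (prod_encode (n, uu))) w u"
  unfolding JF_def by blast

lemma orc0_ok:
  assumes "chi X q = Some z"
  shows "\<exists>w u. OrcOK 0 q z w u \<and> set_decode w \<subseteq> genI (JF e0) (join_compl X) \<and> set_decode u \<subseteq> join_compl X"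
proof (cases "q \<in> X")
  case True
  then have "z = 1" using assms by (simp add: chi_def)
  moreover have "2 * q \<in> join_compl X" using True join_even by blast
  ultimately show ?thesis unfolding OrcOK_def by (intro exI[of _ 0] exI[of _ "senc {2 * q}"]) simp
next
  case False
  then have "z = 0" using assms by (simp add: chi_def)
  moreover have "2 * q + 1 \<in> join_compl X" using False join_odd by blast
  ultimately show ?thesis unfolding OrcOK_def by (intro exI[of _ 0] exI[of _ "senc {2 * q + 1}"]) simp
qed

lemma orcJ_ok:
  assumes IH: "\<And>a b. App \<phi> s a = Some b \<Longrightarrow> af (list_encode s) a b \<in> genI (JF e0) Og"
    and h: "pjoin (App \<phi> s) (tbl uu) q = Some z"
  shows "\<exists>w u. OrcOK (Suc (cons_c uu (list_encode s))) q z w u \<and> set_decode w \<subseteq> genI (JF e0) Og \<and> set_decode u \<subseteq> Og"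
proof (cases "even q")
  case True
  then have "App \<phi> s (q div 2) = Some z" using h by (simp add: pjoin_even)
  then have "af (list_encode s) (q div 2) z \<in> genI (JF e0) Og" by (rule IH)
  then show ?thesis unfolding OrcOK_def using True
    by (intro exI[of _ "senc {af (list_encode s) (q div 2) z}"] exI[of _ 0]) auto
next
  case False
  then have "tblrel uu (q div 2) z" using h by (simp add: pjoin_odd tblrel_iff)
  then show ?thesis unfolding OrcOK_def using False by (intro exI[of _ 0] exI[of _ 0]) auto
qed

lemma App_fct:
  "App (Phi (chi X) e0) s a = Some b \<Longrightarrow> af (list_encode s) a b \<in> genI (JF e0) (join_compl X)"
proof (induction s arbitrary: a b)
  case Nil
  then have "ev (chi X) e0 [a] b" by (simp add: Phi_Some)
  then have "evf 0 e0 (list_encode [a]) b \<in> genI (JF e0) (join_compl X)"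
    by (rule ev_fct) (use orc0_ok in blast)
  then have ev: "evf 0 e0 (cons_c a 0) b \<in> genI (JF e0) (join_compl X)" by (simp add: cons_c_def)
  show ?case
  proof (rule gI'[of _ _ "senc {evf 0 e0 (cons_c a 0) b}" 0])
    show "JF e0 (af (list_encode []) a b) (senc {evf 0 e0 (cons_c a 0) b}) 0"
      by (simp add: JF_af0)
  qed (use ev in auto)
next
  case (Cons uu s)
  let ?\<phi> = "Phi (chi X) e0"
  obtain e where e: "App ?\<phi> s 0 = Some e" "Phi (pjoin (App ?\<phi> s) (tbl uu)) e a = Some b"
    using Cons.prems by (auto simp: Bapp0_def split: option.splits)
  have ev: "ev (pjoin (App ?\<phi> s) (tbl uu)) e [a] b" using e(2) by (simp add: Phi_Some)
  have "evf (Suc (cons_c uu (list_encode s))) e (list_encode [a]) b \<in> genI (JF e0) (join_compl X)"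
    by (rule ev_fct[OF ev]) (use orcJ_ok[OF Cons.IH] in blast)
  then have f1: "evf (Suc (cons_c uu (list_encode s))) e (cons_c a 0) b \<in> genI (JF e0) (join_compl X)"
    by (simp add: cons_c_def)
  have f2: "af (list_encode s) 0 e \<in> genI (JF e0) (join_compl X)" using Cons.IH e(1) by blast
  show ?case
  proof (rule gI'[of _ _ "senc {af (list_encode s) 0 e, evf (Suc (cons_c uu (list_encode s))) e (cons_c a 0) b}" 0])
    show "JF e0 (af (list_encode (uu # s)) a b) (senc {af (list_encode s) 0 e, evf (Suc (cons_c uu (list_encode s))) e (cons_c a 0) b}) 0"
      unfolding list_encode_Cons by (rule JF_afc[where e=e]) simp_all
  qed (use f1 f2 in auto)
qed

lemma mem_fct:
  "memf (App (Phi (chi X) e0) s) c \<Longrightarrow> mf (list_encode s) c \<in> genI (JF e0) (join_compl X)"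
proof (induction c arbitrary: s rule: less_induct)
  case (less c)
  let ?\<phi> = "Phi (chi X) e0"
  obtain n uu where c: "c = prod_encode (n, uu)" by (metis prod_decode_inverse surj_pair)
  have m: "memf (App ?\<phi> s) (prod_encode (n, uu))" using less.prems c by simp
  then have nz: "prod_encode (n, uu) \<noteq> 0" by (simp add: memf_pe)
  show ?case
  proof (cases "uu = 1")
    case True
    then have "App ?\<phi> s (pd1 n) = Some (pd2 n)" using m by (simp add: memf_pe)
    then have f: "af (list_encode s) (pd1 n) (pd2 n) \<in> genI (JF e0) (join_compl X)" by (rule App_fct)
    show ?thesis
    proof (rule gI'[of _ _ "senc {af (list_encode s) (pd1 n) (pd2 n)}" 0])
      have "c = prod_encode (prod_encode (pd1 n, pd2 n), 1)" using c True by simp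
      then show "JF e0 (mf (list_encode s) c) (senc {af (list_encode s) (pd1 n) (pd2 n)}) 0"
        by (simp only:) (rule JF_mf1, simp)
    qed (use f in auto)
  next
    case False
    then have h: "even uu" "memf (App ?\<phi> (uu # s)) n" using m by (simp_all add: memf_pe)
    have "pd1 c < c" using c nz by (intro pd1_less) simp
    then have "n < c" using c by simp
    then have f: "mf (list_encode (uu # s)) n \<in> genI (JF e0) (join_compl X)" using less.IH h(2) by blast
    show ?thesis
    proof (rule gI'[of _ _ "senc {mf (cons_c uu (list_encode s)) n}" 0])
      show "JF e0 (mf (list_encode s) c) (senc {mf (cons_c uu (list_encode s)) n}) 0"
        unfolding c using h(1) nz by (rule JF_mf2) simp
    qed (use f in \<open>auto simp: cons_c_def\<close>)
  qed
qed


lemma join_compl_empty: "join_compl {} = {x. odd x}"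
  by (auto simp: join_compl_def) presburger

lemma ev_iff_fct:
  "ev (chi X) e xs y \<longleftrightarrow> evf 0 e (list_encode xs) y \<in> genI (JF e0) (join_compl X)"
proof
  assume "ev (chi X) e xs y"
  then show "evf 0 e (list_encode xs) y \<in> genI (JF e0) (join_compl X)"
    by (rule ev_fct) (use orc0_ok in blast)
next
  assume "evf 0 e (list_encode xs) y \<in> genI (JF e0) (join_compl X)"
  then have "Sem X e0 (evf 0 e (list_encode xs) y)" by (rule Fct_sound)
  then show "ev (chi X) e xs y" by simp
qed

lemma ce_sig:
  assumes "ce A" shows "sig (\<lambda>n. n \<in> A)"
proof -
  obtain e where e: "A = {n. Phi (chi {}) e n \<noteq> None}" using assms unfolding ce_def by blast
  obtain Z where Z: "sig (\<lambda>m. m \<in> Z)" "\<And>Og. genI (JF 0) Og = {x. \<exists>u. prod_encode (x, u) \<in> Z \<and> set_decode u \<subseteq> Og}"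
    using genI_sig[OF JF_sig] by blast
  have "n \<in> A \<longleftrightarrow> (\<exists>y u. prod_encode (evf 0 e (cons_c n 0) y, u) \<in> Z \<and> (\<forall>i<u. i \<in> set_decode u \<longrightarrow> odd i))" for n
  proof -
    have "n \<in> A \<longleftrightarrow> (\<exists>y. ev (chi {}) e [n] y)" using e by (auto simp: Phi_Some)
    also have "\<dots> \<longleftrightarrow> (\<exists>y. evf 0 e (cons_c n 0) y \<in> genI (JF 0) (join_compl {}))"
      using ev_iff_fct[of "{}" e "[n]" _ 0] by (simp add: cons_c_def)
    also have "\<dots> \<longleftrightarrow> (\<exists>y u. prod_encode (evf 0 e (cons_c n 0) y, u) \<in> Z \<and> (\<forall>i<u. i \<in> set_decode u \<longrightarrow> odd i))"
      unfolding Z(2) join_compl_empty using set_decode_less by blast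
    finally show ?thesis .
  qed
  moreover have "sig (\<lambda>n. \<exists>y u. prod_encode (evf 0 e (cons_c n 0) y, u) \<in> Z \<and> (\<forall>i<u. i \<in> set_decode u \<longrightarrow> odd i))"
    unfolding evf_def cons_c_def
    by (intro sig_mem[OF Z(1)] sig_intros sig_prcB prcB_intros prc_intros)
  ultimately show ?thesis by simp
qed


lemma pjoin_mono: "\<phi> \<subseteq>\<^sub>m \<phi>' \<Longrightarrow> \<psi> \<subseteq>\<^sub>m \<psi>' \<Longrightarrow> pjoin \<phi> \<psi> \<subseteq>\<^sub>m pjoin \<phi>' \<psi>'"
  unfolding map_le_def pjoin_def by (auto simp: dom_def)

lemma Bapp0_mono:
  assumes "\<phi> \<subseteq>\<^sub>m \<phi>'" "\<psi> \<subseteq>\<^sub>m \<psi>'" shows "Bapp0 \<phi> \<psi> \<subseteq>\<^sub>m Bapp0 \<phi>' \<psi>'"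
  unfolding map_le_def
proof
  fix n assume "n \<in> dom (Bapp0 \<phi> \<psi>)"
  then obtain y e where y: "\<phi> 0 = Some e" "Phi (pjoin \<phi> \<psi>) e n = Some y"
    by (auto simp: Bapp0_def split: option.splits)
  have "\<phi>' 0 = Some e" using y(1) assms(1) by (force simp: map_le_def)
  moreover have "ev (pjoin \<phi>' \<psi>') e [n] y" using y(2) ev_mono pjoin_mono[OF assms] by (simp add: Phi_Some)
  then have "Phi (pjoin \<phi>' \<psi>') e n = Some y" by (simp add: Phi_Some)
  ultimately show "Bapp0 \<phi> \<psi> n = Bapp0 \<phi>' \<psi>' n" using y by (simp add: Bapp0_def)
qed

lemma memf_mono: "memf \<chi> c \<Longrightarrow> \<chi> \<subseteq>\<^sub>m \<chi>' \<Longrightarrow> memf \<chi>' c"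
proof (induction c arbitrary: \<chi> \<chi>' rule: less_induct)
  case (less c)
  obtain n u where c: "c = prod_encode (n, u)" by (metis prod_decode_inverse surj_pair)
  have m: "memf \<chi> (prod_encode (n, u))" using less.prems c by simp
  then have nz: "prod_encode (n, u) \<noteq> 0" by (simp add: memf_pe)
  show ?case
  proof (cases "u = 1")
    case True
    then have "\<chi> (pd1 n) = Some (pd2 n)" using m by (simp add: memf_pe)
    then have "\<chi>' (pd1 n) = Some (pd2 n)" using less.prems(2) by (force simp: map_le_def)
    then show ?thesis using c True nz by (simp add: memf_pe)
  next
    case False
    then have h: "even u" "memf (Bapp0 \<chi> (tbl u)) n" using m by (simp_all add: memf_pe)
    have "pd1 c < c" using c nz by (intro pd1_less) simp
    then have "n < c" using c by simp
    moreover have "Bapp0 \<chi> (tbl u) \<subseteq>\<^sub>m Bapp0 \<chi>' (tbl u)" using less.prems(2) by (rule Bapp0_mono) simp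
    ultimately have "memf (Bapp0 \<chi>' (tbl u)) n" using less.IH h(2) by blast
    then show ?thesis using c False h(1) nz by (simp add: memf_pe)
  qed
qed

lemma restrict_le: "f |` A \<subseteq>\<^sub>m f" by (auto simp: map_le_def)

lemma restrict_pjoin_le:
  "pjoin \<chi> \<tau> |` Q \<subseteq>\<^sub>m pjoin (\<chi> |` insert 0 ((\<lambda>q. q div 2) ` {q\<in>Q. even q})) (\<tau> |` ((\<lambda>q. q div 2) ` {q\<in>Q. odd q}))"
  unfolding map_le_def pjoin_def by (auto simp: restrict_map_def split: if_splits)

lemma Bapp0_use:
  assumes fin: "finite (dom \<rho>)" and le: "\<rho> \<subseteq>\<^sub>m Bapp0 \<chi> \<tau>"
  shows "\<exists>\<chi>0 \<tau>0. \<chi>0 \<subseteq>\<^sub>m \<chi> \<and> \<tau>0 \<subseteq>\<^sub>m \<tau> \<and> finite (dom \<chi>0) \<and> finite (dom \<tau>0) \<and> \<rho> \<subseteq>\<^sub>m Bapp0 \<chi>0 \<tau>0"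
proof (cases "dom \<rho> = {}")
  case True
  then show ?thesis by (intro exI[of _ Map.empty]) (auto simp: map_le_def)
next
  case False
  then obtain n0 where "n0 \<in> dom \<rho>" by blast
  then have "Bapp0 \<chi> \<tau> n0 \<noteq> None" using le by (force simp: map_le_def)
  then obtain e where e: "\<chi> 0 = Some e" by (auto simp: Bapp0_def split: option.splits)
  have ev: "\<forall>n\<in>dom \<rho>. ev (pjoin \<chi> \<tau>) e [n] (the (\<rho> n))"
  proof
    fix n assume n: "n \<in> dom \<rho>"
    then have "Bapp0 \<chi> \<tau> n = \<rho> n" using le by (simp add: map_le_def)
    then show "ev (pjoin \<chi> \<tau>) e [n] (the (\<rho> n))" using n e by (auto simp: Bapp0_def Phi_Some)
  qed
  have "\<forall>n\<in>dom \<rho>. \<exists>Q. finite Q \<and> ev (pjoin \<chi> \<tau> |` Q) e [n] (the (\<rho> n))"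
  proof
    fix n assume "n \<in> dom \<rho>"
    then show "\<exists>Q. finite Q \<and> ev (pjoin \<chi> \<tau> |` Q) e [n] (the (\<rho> n))" using ev by (intro ev_use) blast
  qed
  then obtain QF where QF: "\<forall>n\<in>dom \<rho>. finite (QF n) \<and> ev (pjoin \<chi> \<tau> |` QF n) e [n] (the (\<rho> n))"
    by (rule bchoice[elim_format]) blast
  define Q where "Q = (\<Union>n\<in>dom \<rho>. QF n)"
  have finQ: "finite Q" unfolding Q_def using fin QF by (intro finite_UN_I) auto
  define \<chi>0 where "\<chi>0 = \<chi> |` insert 0 ((\<lambda>q. q div 2) ` {q\<in>Q. even q})"
  define \<tau>0 where "\<tau>0 = \<tau> |` ((\<lambda>q. q div 2) ` {q\<in>Q. odd q})"
  have "\<rho> \<subseteq>\<^sub>m Bapp0 \<chi>0 \<tau>0"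
    unfolding map_le_def
  proof
    fix n assume n: "n \<in> dom \<rho>"
    have sub: "QF n \<subseteq> Q" using n by (auto simp: Q_def)
    have "ev (pjoin \<chi> \<tau> |` QF n) e [n] (the (\<rho> n))" using QF n by blast
    then have "ev (pjoin \<chi> \<tau> |` Q) e [n] (the (\<rho> n))" using sub by (rule ev_sub)
    then have "ev (pjoin \<chi>0 \<tau>0) e [n] (the (\<rho> n))"
      unfolding \<chi>0_def \<tau>0_def by (rule ev_mono) (rule restrict_pjoin_le)
    then have p: "Phi (pjoin \<chi>0 \<tau>0) e n = Some (the (\<rho> n))" by (simp add: Phi_Some)
    have "\<chi>0 0 = Some e" using e by (simp add: \<chi>0_def)
    then show "\<rho> n = Bapp0 \<chi>0 \<tau>0 n" using n p by (auto simp: Bapp0_def)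
  qed
  moreover have "finite (dom \<chi>0)" "finite (dom \<tau>0)" using finQ by (simp_all add: \<chi>0_def \<tau>0_def)
  moreover have "\<chi>0 \<subseteq>\<^sub>m \<chi>" "\<tau>0 \<subseteq>\<^sub>m \<tau>" unfolding \<chi>0_def \<tau>0_def by (rule restrict_le)+
  ultimately show ?thesis by blast
qed

lemma memf_cont: "memf \<chi> c \<Longrightarrow> \<exists>\<chi>0. \<chi>0 \<subseteq>\<^sub>m \<chi> \<and> finite (dom \<chi>0) \<and> memf \<chi>0 c"
proof (induction c arbitrary: \<chi> rule: less_induct)
  case (less c)
  obtain n u where c: "c = prod_encode (n, u)" by (metis prod_decode_inverse surj_pair)
  have m: "memf \<chi> (prod_encode (n, u))" using less.prems c by simp
  then have nz: "prod_encode (n, u) \<noteq> 0" by (simp add: memf_pe)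
  show ?case
  proof (cases "u = 1")
    case True
    then have h: "\<chi> (pd1 n) = Some (pd2 n)" using m by (simp add: memf_pe)
    have "\<chi> |` {pd1 n} \<subseteq>\<^sub>m \<chi>" by (rule restrict_le)
    moreover have "memf (\<chi> |` {pd1 n}) c" using h c True nz by (simp add: memf_pe)
    ultimately show ?thesis by (intro exI[of _ "\<chi> |` {pd1 n}"]) simp
  next
    case False
    then have h: "even u" "memf (Bapp0 \<chi> (tbl u)) n" using m by (simp_all add: memf_pe)
    have "pd1 c < c" using c nz by (intro pd1_less) simp
    then have "n < c" using c by simp
    then obtain \<rho> where \<rho>: "\<rho> \<subseteq>\<^sub>m Bapp0 \<chi> (tbl u)" "finite (dom \<rho>)" "memf \<rho> n" using less.IH h(2) by blast
    obtain \<chi>0 \<tau>0 where z: "\<chi>0 \<subseteq>\<^sub>m \<chi>" "\<tau>0 \<subseteq>\<^sub>m tbl u" "finite (dom \<chi>0)" "\<rho> \<subseteq>\<^sub>m Bapp0 \<chi>0 \<tau>0"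
      using Bapp0_use[OF \<rho>(2,1)] by blast
    have "Bapp0 \<chi>0 \<tau>0 \<subseteq>\<^sub>m Bapp0 \<chi>0 (tbl u)" using z(2) by (intro Bapp0_mono) simp_all
    then have "\<rho> \<subseteq>\<^sub>m Bapp0 \<chi>0 (tbl u)" using z(4) map_le_trans by blast
    then have "memf (Bapp0 \<chi>0 (tbl u)) n" using memf_mono \<rho>(3) by blast
    then have "memf \<chi>0 c" using c False h(1) nz by (simp add: memf_pe)
    then show ?thesis using z by blast
  qed
qed


definition fE :: "(nat \<Rightarrow> nat option) \<Rightarrow> nat set" where "fE \<chi> = {c. memf \<chi> c}"

lemma memf_graph: "memf \<chi> (prod_encode (prod_encode (a, b), 1)) \<longleftrightarrow> \<chi> a = Some b"
  by (simp add: memf_pe)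

lemma tbl_finite:
  assumes "finite (dom \<sigma>)"
  shows "\<exists>u. even u \<and> tbl u = \<sigma> \<and> (\<forall>i\<in>set_decode u. \<exists>a b. \<sigma> a = Some b \<and> i = prod_encode (prod_encode (a, b), 1))"
proof -
  define S where "S = (\<lambda>a. prod_encode (prod_encode (a, the (\<sigma> a)), 1)) ` dom \<sigma>"
  have finS: "finite S" using assms by (simp add: S_def)
  have memS: "prod_encode (prod_encode (a, b), 1) \<in> S \<longleftrightarrow> \<sigma> a = Some b" for a b
  proof
    assume "\<sigma> a = Some b"
    then have "a \<in> dom \<sigma>" "prod_encode (prod_encode (a, b), 1) = prod_encode (prod_encode (a, the (\<sigma> a)), 1)" by auto
    then show "prod_encode (prod_encode (a, b), 1) \<in> S" unfolding S_def by blast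
  qed (auto simp: S_def)
  have "0 \<notin> S" by (auto simp: S_def)
  then have ev: "even (senc S)" using finS set_decode_0[of "senc S"] by simp
  have "tbl (senc S) = \<sigma>"
  proof
    fix a
    show "tbl (senc S) a = \<sigma> a"
    proof (cases "\<sigma> a")
      case None
      then show ?thesis using memS finS by (simp add: tbl_def)
    next
      case (Some b)
      then have "tblrel (senc S) a b" using memS finS by (auto simp: tblrel_def)
      then show ?thesis using Some by (simp add: tblrel_iff)
    qed
  qed
  moreover have "\<forall>i\<in>set_decode (senc S). \<exists>a b. \<sigma> a = Some b \<and> i = prod_encode (prod_encode (a, b), 1)"
    using finS by (auto simp: S_def)
  ultimately show ?thesis using ev by blast
qed

lemma tbl_le:
  assumes "set_decode u \<subseteq> fE \<psi>" shows "tbl u \<subseteq>\<^sub>m \<psi>"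
  unfolding map_le_def
proof
  fix a assume "a \<in> dom (tbl u)"
  then obtain b where b: "tbl u a = Some b" by blast
  then have "prod_encode (prod_encode (a, b), 1) \<in> set_decode u" by (simp add: tblrel_iff[symmetric] tblrel_def)
  then have "\<psi> a = Some b" using assms memf_graph by (auto simp: fE_def)
  then show "tbl u a = \<psi> a" using b by simp
qed

lemma app_pres: "gapp (fE \<phi>) (fE \<psi>) = fE (Bapp0 \<phi> \<psi>)"
proof (intro set_eqI iffI)
  fix n assume "n \<in> gapp (fE \<phi>) (fE \<psi>)"
  then obtain u where u: "memf \<phi> (prod_encode (n, u))" "set_decode u \<subseteq> fE \<psi>"
    by (auto simp: gapp_def D_eq fE_def)
  have "u \<noteq> 1"
  proof
    assume "u = 1"
    then have "0 \<in> set_decode u" by simp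
    then have "0 \<in> fE \<psi>" using u(2) by blast
    then show False by (simp add: fE_def)
  qed
  then have "memf (Bapp0 \<phi> (tbl u)) n" using u(1) by (simp add: memf_pe)
  moreover have "Bapp0 \<phi> (tbl u) \<subseteq>\<^sub>m Bapp0 \<phi> \<psi>" by (rule Bapp0_mono) (simp_all add: tbl_le[OF u(2)])
  ultimately show "n \<in> fE (Bapp0 \<phi> \<psi>)" using memf_mono by (auto simp: fE_def)
next
  fix n assume "n \<in> fE (Bapp0 \<phi> \<psi>)"
  then have m: "memf (Bapp0 \<phi> \<psi>) n" by (simp add: fE_def)
  then have n0: "n \<noteq> 0" using memf_0 by metis
  obtain \<rho> where \<rho>: "\<rho> \<subseteq>\<^sub>m Bapp0 \<phi> \<psi>" "finite (dom \<rho>)" "memf \<rho> n" using memf_cont[OF m] by blast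
  obtain \<chi>0 \<tau>0 where z: "\<chi>0 \<subseteq>\<^sub>m \<phi>" "\<tau>0 \<subseteq>\<^sub>m \<psi>" "finite (dom \<tau>0)" "\<rho> \<subseteq>\<^sub>m Bapp0 \<chi>0 \<tau>0"
    using Bapp0_use[OF \<rho>(2,1)] by blast
  have "Bapp0 \<chi>0 \<tau>0 \<subseteq>\<^sub>m Bapp0 \<phi> \<tau>0" using z(1) by (rule Bapp0_mono) simp
  then have "\<rho> \<subseteq>\<^sub>m Bapp0 \<phi> \<tau>0" using z(4) map_le_trans by blast
  then have m0: "memf (Bapp0 \<phi> \<tau>0) n" using memf_mono \<rho>(3) by blast
  obtain u where u: "even u" "tbl u = \<tau>0" "\<forall>i\<in>set_decode u. \<exists>a b. \<tau>0 a = Some b \<and> i = prod_encode (prod_encode (a, b), 1)"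
    using tbl_finite[OF z(3)] by blast
  have "set_decode u \<subseteq> fE \<psi>"
  proof
    fix i assume "i \<in> set_decode u"
    then obtain a b where ab: "\<tau>0 a = Some b" "i = prod_encode (prod_encode (a, b), 1)" using u(3) by blast
    then have "\<psi> a = Some b" using z(2) by (force simp: map_le_def)
    then show "i \<in> fE \<psi>" using ab(2) memf_graph by (simp add: fE_def)
  qed
  moreover have "memf \<phi> (prod_encode (n, u))" using m0 u n0 by (auto simp: memf_pe)
  ultimately show "n \<in> gapp (fE \<phi>) (fE \<psi>)" by (auto simp: gapp_def D_eq fE_def)
qed

lemma fE_inj: assumes "fE \<phi> = fE \<phi>'" shows "\<phi> = \<phi>'"
proof
  fix a
  have h: "\<phi> a = Some b \<longleftrightarrow> \<phi>' a = Some b" for b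
    using assms memf_graph[of \<phi> a b] memf_graph[of \<phi>' a b] by (auto simp: fE_def set_eq_iff)
  show "\<phi> a = \<phi>' a"
  proof (cases "\<phi> a")
    case None
    then show ?thesis using h by (cases "\<phi>' a") auto
  next
    case (Some b)
    then show ?thesis using h by simp
  qed
qed

lemma join_G:
  assumes "le_e (join_compl X) Y" shows "join_compl X \<in> Gcarrier Y"
proof -
  obtain R where R: "ce_rel R" "\<And>x. x \<in> join_compl X \<longleftrightarrow> (\<exists>u. R x u \<and> D u \<subseteq> Y)"
    using assms unfolding le_e_def by blast
  define Rh where "Rh = {prod_encode (x, u) | x u. R x u}"
  have "ce Rh" using R(1) unfolding ce_rel_def Rh_def .
  then have "Rh \<in> Gcarrier Y" by (rule G_ce)
  then have "gapp Rh Y \<in> Gcarrier Y" using G_base by (rule G_app)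
  moreover have "gapp Rh Y = join_compl X" using R(2) by (auto simp: gapp_def Rh_def)
  ultimately show ?thesis by simp
qed

lemma fE_G:
  assumes "le_e (join_compl X) Y" "\<phi> \<in> Bcarrier X" shows "fE \<phi> \<in> Gcarrier Y"
proof -
  obtain e0 where e0: "\<phi> = Phi (chi X) e0" using assms(2) unfolding Bcarrier_def by blast
  obtain Z where Z: "sig (\<lambda>m. m \<in> Z)" "\<And>Og. genI (JF e0) Og = {x. \<exists>u. prod_encode (x, u) \<in> Z \<and> set_decode u \<subseteq> Og}"
    using genI_sig[OF JF_sig] by blast
  have "c \<in> fE \<phi> \<longleftrightarrow> mf 0 c \<in> genI (JF e0) (join_compl X)" for c
  proof
    assume "c \<in> fE \<phi>"
    then have "memf (App (Phi (chi X) e0) []) c" using e0 by (simp add: fE_def)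
    then show "mf 0 c \<in> genI (JF e0) (join_compl X)" using mem_fct by fastforce
  next
    assume "mf 0 c \<in> genI (JF e0) (join_compl X)"
    then have "Sem X e0 (mf 0 c)" by (rule Fct_sound)
    then show "c \<in> fE \<phi>" using e0 by (simp add: fE_def)
  qed
  then have "fE \<phi> = gapp {m. prod_encode (mf 0 (pd1 m), pd2 m) \<in> Z} (join_compl X)"
    using Z(2) by (auto simp: gapp_def D_eq)
  moreover have "ce {m. prod_encode (mf 0 (pd1 m), pd2 m) \<in> Z}"
    by (rule sig_ce) (unfold mf_def, intro sig_mem[OF Z(1)] prc_intros)
  ultimately show ?thesis using join_G[OF assms(1)] by (auto intro: G_app G_ce)
qed

theorem embed_if:
  assumes "le_e (join_compl X) Y"
  shows "pca_embedding (Bcarrier X) Bapp (Gcarrier Y) Gapp fE"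
  unfolding pca_embedding_def
proof (intro conjI ballI allI impI)
  show "fE ` Bcarrier X \<subseteq> Gcarrier Y" using fE_G[OF assms] by blast
  show "inj_on fE (Bcarrier X)" by (auto intro: inj_onI fE_inj)
  fix a b c assume "Bapp a b = Some c"
  then have "c = Bapp0 a b" by (simp add: Bapp_eq)
  then show "Gapp (fE a) (fE b) = Some (fE c)" by (simp add: Gapp_def app_pres)
qed


definition eY :: "nat set \<Rightarrow> nat set \<Rightarrow> bool" where
  "eY Og A \<longleftrightarrow> (\<exists>ZZ. sig (\<lambda>m. m \<in> ZZ) \<and> A = gapp ZZ Og)"

lemma gapp_alt: "gapp ZZ Og = {x. \<exists>u. prod_encode (x, u) \<in> ZZ \<and> set_decode u \<subseteq> Og}"
  by (simp add: gapp_def D_eq)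

lemma le_e_of_eY: assumes "eY Y A" shows "le_e A Y"
proof -
  obtain ZZ where ZZ: "sig (\<lambda>m. m \<in> ZZ)" "A = gapp ZZ Y" using assms unfolding eY_def by blast
  have "{prod_encode (x, u) | x u. prod_encode (x, u) \<in> ZZ} = {m. m \<in> ZZ}"
    by (auto, metis prod_decode_inverse surj_pair)
  then have "ce_rel (\<lambda>x u. prod_encode (x, u) \<in> ZZ)" unfolding ce_rel_def using sig_ce[OF ZZ(1)] by simp
  then show ?thesis unfolding le_e_def using ZZ(2) by (intro exI[of _ "\<lambda>x u. prod_encode (x, u) \<in> ZZ"]) (auto simp: gapp_def)
qed

lemma set_decode_pow2: "set_decode (2 ^ x) = {x}"
  using set_decode_plus_power_2[of x 0] by simp

lemma eY_base: "eY Y Y"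
proof -
  define ZZ where "ZZ = {m. pd2 m = 2 ^ pd1 m}"
  have "sig (\<lambda>m. m \<in> ZZ)" unfolding ZZ_def mem_Collect_eq
    by (intro sig_prcB prcB_intros prc_intros)
  moreover have "Y = gapp ZZ Y"
  proof (intro set_eqI iffI)
    fix x assume "x \<in> Y"
    then show "x \<in> gapp ZZ Y" unfolding gapp_alt ZZ_def by (intro CollectI exI[of _ "2 ^ x"]) (simp add: set_decode_pow2)
  next
    fix x assume "x \<in> gapp ZZ Y"
    then show "x \<in> Y" unfolding gapp_alt ZZ_def by (auto simp: set_decode_pow2)
  qed
  ultimately show ?thesis unfolding eY_def by blast
qed

lemma eY_ce: assumes "ce A" shows "eY Og A"
proof -
  define ZZ where "ZZ = {m. pd2 m = 0 \<and> pd1 m \<in> A}"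
  have "sig (\<lambda>m. m \<in> ZZ)" unfolding ZZ_def mem_Collect_eq
    by (intro sig_conj sig_mem[OF ce_sig[OF assms]] sig_prcB prcB_intros prc_intros)
  moreover have "A = gapp ZZ Og"
  proof (intro set_eqI iffI)
    fix x assume "x \<in> A"
    then show "x \<in> gapp ZZ Og" unfolding gapp_alt ZZ_def by (intro CollectI exI[of _ 0]) simp
  next
    fix x assume "x \<in> gapp ZZ Og"
    then show "x \<in> A" unfolding gapp_alt ZZ_def by auto
  qed
  ultimately show ?thesis unfolding eY_def by blast
qed

definition JG :: "nat set \<Rightarrow> nat set \<Rightarrow> nat \<Rightarrow> nat \<Rightarrow> nat \<Rightarrow> bool" where
  "JG ZA ZB x w u \<longleftrightarrow>
     (\<exists>i. x = prod_encode (0, i) \<and> prod_encode (i, u) \<in> ZB) \<or>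
     (\<exists>n v u1. x = prod_encode (1, n) \<and> prod_encode (prod_encode (n, v), u1) \<in> ZA \<and>
        (\<forall>i<u1. i \<in> set_decode u1 \<longrightarrow> i \<in> set_decode u) \<and>
        (\<forall>i<v. i \<in> set_decode v \<longrightarrow> prod_encode (0, i) \<in> set_decode w))"

lemma subset_code: "(\<forall>i<u1. i \<in> set_decode u1 \<longrightarrow> i \<in> set_decode u) \<longleftrightarrow> set_decode u1 \<subseteq> set_decode u"
  using set_decode_less by blast

lemma eY_gapp:
  assumes A: "eY Og A" and B: "eY Og B" shows "eY Og (gapp A B)"
proof -
  obtain ZA where ZA: "sig (\<lambda>m. m \<in> ZA)" "A = gapp ZA Og" using A unfolding eY_def by blast
  obtain ZB where ZB: "sig (\<lambda>m. m \<in> ZB)" "B = gapp ZB Og" using B unfolding eY_def by blast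
  have Jsig: "sig (\<lambda>m. JG ZA ZB (pd1 m) (pd1 (pd2 m)) (pd2 (pd2 m)))"
    unfolding JG_def by (intro sig_mem[OF ZA(1)] sig_mem[OF ZB(1)] sig_intros sig_prcB prcB_intros prc_intros)
  obtain ZZ where ZZ: "sig (\<lambda>m. m \<in> ZZ)" "\<And>Og. genI (JG ZA ZB) Og = {x. \<exists>u. prod_encode (x, u) \<in> ZZ \<and> set_decode u \<subseteq> Og}"
    using genI_sig[OF Jsig] by blast
  have sound: "x \<in> genI (JG ZA ZB) Og \<Longrightarrow> (\<forall>i. x = prod_encode (0, i) \<longrightarrow> i \<in> B) \<and> (\<forall>n. x = prod_encode (1, n) \<longrightarrow> n \<in> gapp A B)" for x
  proof (induction rule: genI.induct)
    case (gI x w u)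
    from gI.hyps(1) show ?case unfolding JG_def
    proof (elim disjE exE conjE)
      fix i assume "x = prod_encode (0, i)" "prod_encode (i, u) \<in> ZB"
      then show ?thesis using gI.hyps(2) ZB(2) by (auto simp: gapp_alt)
    next
      fix n v u1 assume h: "x = prod_encode (1, n)" "prod_encode (prod_encode (n, v), u1) \<in> ZA"
        "\<forall>i<u1. i \<in> set_decode u1 \<longrightarrow> i \<in> set_decode u"
        "\<forall>i<v. i \<in> set_decode v \<longrightarrow> prod_encode (0, i) \<in> set_decode w"
      have "prod_encode (n, v) \<in> A" using h(2,3) gI.hyps(2) ZA(2) subset_code by (auto simp: gapp_alt)
      moreover have "set_decode v \<subseteq> B"
      proof
        fix i assume i: "i \<in> set_decode v"
        then have "prod_encode (0, i) \<in> set_decode w" using h(4) set_decode_less by blast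
        then have "\<forall>i'. prod_encode (0, i) = prod_encode (0, i') \<longrightarrow> i' \<in> B" using gI.IH by blast
        then show "i \<in> B" by blast
      qed
      ultimately show ?thesis using h(1) by (auto simp: gapp_alt)
    qed
  qed
  have cB: "i \<in> B \<Longrightarrow> prod_encode (0, i) \<in> genI (JG ZA ZB) Og" for i
  proof -
    assume "i \<in> B"
    then obtain u where u: "prod_encode (i, u) \<in> ZB" "set_decode u \<subseteq> Og" using ZB(2) by (auto simp: gapp_alt)
    show ?thesis by (rule gI[of _ _ 0 u]) (use u in \<open>auto simp: JG_def\<close>)
  qed
  have cA: "n \<in> gapp A B \<Longrightarrow> prod_encode (1, n) \<in> genI (JG ZA ZB) Og" for n
  proof -
    assume "n \<in> gapp A B"
    then obtain v where v: "prod_encode (n, v) \<in> A" "set_decode v \<subseteq> B" by (auto simp: gapp_alt)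
    then obtain u1 where u1: "prod_encode (prod_encode (n, v), u1) \<in> ZA" "set_decode u1 \<subseteq> Og"
      using ZA(2) by (auto simp: gapp_alt)
    let ?w = "senc ((\<lambda>i. prod_encode (0, i)) ` set_decode v)"
    have "JG ZA ZB (prod_encode (1, n)) ?w u1"
      unfolding JG_def using u1(1) set_decode_less by (intro disjI2 exI[of _ n] exI[of _ v] exI[of _ u1]) auto
    then show ?thesis by (rule gI) (use u1 v cB in auto)
  qed
  have "gapp A B = {n. prod_encode (1, n) \<in> genI (JG ZA ZB) Og}" using sound cA by blast
  also have "\<dots> = gapp {m. prod_encode (prod_encode (1, pd1 m), pd2 m) \<in> ZZ} Og"
    unfolding ZZ(2) gapp_alt by auto
  finally have "gapp A B = gapp {m. prod_encode (prod_encode (1, pd1 m), pd2 m) \<in> ZZ} Og" .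
  moreover have "sig (\<lambda>m. m \<in> {m. prod_encode (prod_encode (1, pd1 m), pd2 m) \<in> ZZ})"
    unfolding mem_Collect_eq by (intro sig_mem[OF ZZ(1)] prc_intros)
  ultimately show ?thesis unfolding eY_def by blast
qed

lemma Gcarrier_eY: "A \<in> Gcarrier Y \<Longrightarrow> eY Y A"
  by (induction rule: Gcarrier.induct) (auto intro: eY_base eY_ce eY_gapp)


lemma gapp_gapp: "m \<in> gapp (gapp ZP Og) B \<longleftrightarrow>
   (\<exists>v u1. prod_encode (prod_encode (m, v), u1) \<in> ZP \<and> set_decode u1 \<subseteq> Og \<and> set_decode v \<subseteq> B)"
  by (auto simp: gapp_alt)

definition JN :: "nat set \<Rightarrow> nat set \<Rightarrow> nat set \<Rightarrow> nat set \<Rightarrow> nat \<Rightarrow> nat \<Rightarrow> nat \<Rightarrow> nat \<Rightarrow> bool" where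
  "JN Z0 ZS Z1 Z2 m x w u \<longleftrightarrow>
     (\<exists>k. x = prod_encode (0, prod_encode (0, k)) \<and> prod_encode (k, u) \<in> Z0) \<or>
     (\<exists>n k v u1. x = prod_encode (0, prod_encode (Suc n, k)) \<and> prod_encode (prod_encode (k, v), u1) \<in> ZS \<and>
        (\<forall>i<u1. i \<in> set_decode u1 \<longrightarrow> i \<in> set_decode u) \<and>
        (\<forall>i<v. i \<in> set_decode v \<longrightarrow> prod_encode (0, prod_encode (n, i)) \<in> set_decode w)) \<or>
     (\<exists>y v u1. x = prod_encode (1, y) \<and> even y \<and> prod_encode (prod_encode (m, v), u1) \<in> Z1 \<and>
        (\<forall>i<u1. i \<in> set_decode u1 \<longrightarrow> i \<in> set_decode u) \<and>
        (\<forall>i<v. i \<in> set_decode v \<longrightarrow> prod_encode (0, prod_encode (y div 2, i)) \<in> set_decode w)) \<or>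
     (\<exists>y v u1. x = prod_encode (1, y) \<and> odd y \<and> prod_encode (prod_encode (m, v), u1) \<in> Z2 \<and>
        (\<forall>i<u1. i \<in> set_decode u1 \<longrightarrow> i \<in> set_decode u) \<and>
        (\<forall>i<v. i \<in> set_decode v \<longrightarrow> prod_encode (0, prod_encode (y div 2, i)) \<in> set_decode w))"

lemma fam_eY:
  fixes Y Z0 ZS Z1 Z2 :: "nat set" and m :: nat
  assumes Z0: "sig (\<lambda>x. x \<in> Z0)" and ZS: "sig (\<lambda>x. x \<in> ZS)" and Z1: "sig (\<lambda>x. x \<in> Z1)" and Z2: "sig (\<lambda>x. x \<in> Z2)"
  defines "A \<equiv> (\<lambda>n. rec_nat (gapp Z0 Y) (\<lambda>_ B. gapp (gapp ZS Y) B) n)"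
  shows "eY Y {y. (even y \<and> m \<in> gapp (gapp Z1 Y) (A (y div 2))) \<or> (odd y \<and> m \<in> gapp (gapp Z2 Y) (A (y div 2)))}"
    (is "eY Y ?T")
proof -
  let ?J = "JN Z0 ZS Z1 Z2 m"
  have A0: "A 0 = gapp Z0 Y" and AS: "A (Suc n) = gapp (gapp ZS Y) (A n)" for n by (simp_all add: A_def)
  have Jsig: "sig (\<lambda>q. ?J (pd1 q) (pd1 (pd2 q)) (pd2 (pd2 q)))"
    unfolding JN_def by (intro sig_mem[OF Z0] sig_mem[OF ZS] sig_mem[OF Z1] sig_mem[OF Z2] sig_intros sig_prcB prcB_intros prc_intros)
  obtain ZZ where ZZ: "sig (\<lambda>q. q \<in> ZZ)" "\<And>Og. genI ?J Og = {x. \<exists>u. prod_encode (x, u) \<in> ZZ \<and> set_decode u \<subseteq> Og}"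
    using genI_sig[OF Jsig] by blast
  have prem: "set_decode v \<subseteq> B"
    if "\<forall>i<v. i \<in> set_decode v \<longrightarrow> prod_encode (0, prod_encode (n, i)) \<in> set_decode w"
       "\<forall>j\<in>set_decode w. (\<forall>n k. j = prod_encode (0, prod_encode (n, k)) \<longrightarrow> k \<in> A n)"
       "B = A n" for v w n B
  proof
    fix i assume "i \<in> set_decode v"
    then have "prod_encode (0, prod_encode (n, i)) \<in> set_decode w" using that(1) set_decode_less by blast
    then show "i \<in> B" using that(2,3) by blast
  qed
  have sound: "x \<in> genI ?J Y \<Longrightarrow> (\<forall>n k. x = prod_encode (0, prod_encode (n, k)) \<longrightarrow> k \<in> A n) \<and> (\<forall>y. x = prod_encode (1, y) \<longrightarrow> y \<in> ?T)" for x
  proof (induction rule: genI.induct)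
    case (gI x w u)
    have IH: "\<forall>j\<in>set_decode w. (\<forall>n k. j = prod_encode (0, prod_encode (n, k)) \<longrightarrow> k \<in> A n)" using gI.IH by blast
    from gI.hyps(1) show ?case unfolding JN_def
    proof (elim disjE exE conjE)
      fix k assume "x = prod_encode (0, prod_encode (0, k))" "prod_encode (k, u) \<in> Z0"
      then show ?thesis using gI.hyps(2) A0 by (auto simp: gapp_alt)
    next
      fix n k v u1 assume h: "x = prod_encode (0, prod_encode (Suc n, k))" "prod_encode (prod_encode (k, v), u1) \<in> ZS"
        "\<forall>i<u1. i \<in> set_decode u1 \<longrightarrow> i \<in> set_decode u"
        "\<forall>i<v. i \<in> set_decode v \<longrightarrow> prod_encode (0, prod_encode (n, i)) \<in> set_decode w"
      have "set_decode v \<subseteq> A n" by (rule prem[OF h(4) IH refl])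
      moreover have "set_decode u1 \<subseteq> Y" using h(3) gI.hyps(2) subset_code by blast
      ultimately have "k \<in> A (Suc n)" unfolding AS gapp_gapp using h(2) by blast
      then show ?thesis using h(1) by simp
    next
      fix y v u1 assume h: "x = prod_encode (1, y)" "even y" "prod_encode (prod_encode (m, v), u1) \<in> Z1"
        "\<forall>i<u1. i \<in> set_decode u1 \<longrightarrow> i \<in> set_decode u"
        "\<forall>i<v. i \<in> set_decode v \<longrightarrow> prod_encode (0, prod_encode (y div 2, i)) \<in> set_decode w"
      have "set_decode v \<subseteq> A (y div 2)" by (rule prem[OF h(5) IH refl])
      moreover have "set_decode u1 \<subseteq> Y" using h(4) gI.hyps(2) subset_code by blast
      ultimately have "m \<in> gapp (gapp Z1 Y) (A (y div 2))" unfolding gapp_gapp using h(3) by blast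
      then show ?thesis using h(1,2) by simp
    next
      fix y v u1 assume h: "x = prod_encode (1, y)" "odd y" "prod_encode (prod_encode (m, v), u1) \<in> Z2"
        "\<forall>i<u1. i \<in> set_decode u1 \<longrightarrow> i \<in> set_decode u"
        "\<forall>i<v. i \<in> set_decode v \<longrightarrow> prod_encode (0, prod_encode (y div 2, i)) \<in> set_decode w"
      have "set_decode v \<subseteq> A (y div 2)" by (rule prem[OF h(5) IH refl])
      moreover have "set_decode u1 \<subseteq> Y" using h(4) gI.hyps(2) subset_code by blast
      ultimately have "m \<in> gapp (gapp Z2 Y) (A (y div 2))" unfolding gapp_gapp using h(3) by blast
      then show ?thesis using h(1,2) by simp
    qed
  qed
  have cA: "k \<in> A n \<Longrightarrow> prod_encode (0, prod_encode (n, k)) \<in> genI ?J Y" for n k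
  proof (induction n arbitrary: k)
    case 0
    then obtain u where u: "prod_encode (k, u) \<in> Z0" "set_decode u \<subseteq> Y" using A0 by (auto simp: gapp_alt)
    have "?J (prod_encode (0, prod_encode (0, k))) 0 u" unfolding JN_def using u(1) by blast
    then show ?case by (rule gI) (use u in auto)
  next
    case (Suc n)
    then obtain v u1 where v: "prod_encode (prod_encode (k, v), u1) \<in> ZS" "set_decode u1 \<subseteq> Y" "set_decode v \<subseteq> A n"
      unfolding AS gapp_gapp by blast
    let ?w = "senc ((\<lambda>i. prod_encode (0, prod_encode (n, i))) ` set_decode v)"
    have "?J (prod_encode (0, prod_encode (Suc n, k))) ?w u1"
    proof -
      have "(\<forall>i<u1. i \<in> set_decode u1 \<longrightarrow> i \<in> set_decode u1) \<and>
        (\<forall>i<v. i \<in> set_decode v \<longrightarrow> prod_encode (0, prod_encode (n, i)) \<in> set_decode ?w)" by simp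
      then show ?thesis unfolding JN_def using v(1) by blast
    qed
    then show ?case by (rule gI) (use v Suc.IH in auto)
  qed
  have cT: "y \<in> ?T \<Longrightarrow> prod_encode (1, y) \<in> genI ?J Y" for y
  proof -
    assume y: "y \<in> ?T"
    let ?B = "A (y div 2)"
    have "\<exists>v u1. ((even y \<and> prod_encode (prod_encode (m, v), u1) \<in> Z1) \<or> (odd y \<and> prod_encode (prod_encode (m, v), u1) \<in> Z2))
       \<and> set_decode u1 \<subseteq> Y \<and> set_decode v \<subseteq> ?B"
      using y unfolding gapp_gapp by blast
    then obtain v u1 where v: "(even y \<and> prod_encode (prod_encode (m, v), u1) \<in> Z1) \<or> (odd y \<and> prod_encode (prod_encode (m, v), u1) \<in> Z2)"
      "set_decode u1 \<subseteq> Y" "set_decode v \<subseteq> ?B" by blast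
    let ?w = "senc ((\<lambda>i. prod_encode (0, prod_encode (y div 2, i))) ` set_decode v)"
    have "?J (prod_encode (1, y)) ?w u1"
    proof -
      have "(\<forall>i<u1. i \<in> set_decode u1 \<longrightarrow> i \<in> set_decode u1) \<and>
        (\<forall>i<v. i \<in> set_decode v \<longrightarrow> prod_encode (0, prod_encode (y div 2, i)) \<in> set_decode ?w)" by simp
      then show ?thesis unfolding JN_def using v(1) by blast
    qed
    then show ?thesis by (rule gI) (use v cA in auto)
  qed
  have "?T = {y. prod_encode (1, y) \<in> genI ?J Y}" using sound cT by blast
  also have "\<dots> = gapp {q. prod_encode (prod_encode (1, pd1 q), pd2 q) \<in> ZZ} Y"
    unfolding ZZ(2) gapp_alt by auto
  finally have "?T = gapp {q. prod_encode (prod_encode (1, pd1 q), pd2 q) \<in> ZZ} Y" .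
  moreover have "sig (\<lambda>q. q \<in> {q. prod_encode (prod_encode (1, pd1 q), pd2 q) \<in> ZZ})"
    unfolding mem_Collect_eq by (intro sig_mem[OF ZZ(1)] prc_intros)
  ultimately show ?thesis unfolding eY_def by blast
qed


definition chiX :: "nat set \<Rightarrow> nat \<Rightarrow> nat" where "chiX X a = (if a \<in> X then 1 else 0)"

lemma chi_chiX: "chi X = (\<lambda>a. Some (chiX X a))" by (simp add: chi_def chiX_def fun_eq_iff)

lemma Bcarrier_tm: "wf t 1 \<Longrightarrow> (\<lambda>n. Some (peval (chiX X) t [n])) \<in> Bcarrier X"
  unfolding Bcarrier_def chi_chiX using compile_Phi[of t "chiX X"] by (auto intro!: exI[of _ "code t"])

lemma Bcarrier_prc: assumes "prc F" shows "(\<lambda>n. Some (F n)) \<in> Bcarrier X"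
proof -
  obtain t where t: "wf t 1" "\<And>og n. peval og t [n] = F n" using assms unfolding prc_def by blast
  show ?thesis using Bcarrier_tm[OF t(1), of X] t(2) by simp
qed

definition "q1 = Cm Sc [Cm Orc [cst 1]]"
definition "tE = Cm Orc [Cm tAdd [q1, q1]]"
definition "T1 = Rc (cst (code tE)) (Cm Orc [Pj 0])"
definition "T2 = Rc (cst (code tE)) (Cm tMonus [cst 1, Cm Orc [Pj 0]])"

lemma wf_q1[simp]: "wf q1 k" by (simp add: q1_def)
lemma wf_tE[simp]: "wf tE k" by (simp add: tE_def)
lemma wf_T1: "wf T1 1" by (simp add: T1_def)
lemma wf_T2: "wf T2 1" by (simp add: T2_def)

lemma ev_q1[simp]: "peval og q1 xs = Suc (og 1)" by (simp add: q1_def)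
lemma ev_tE[simp]: "peval og tE xs = og (Suc (og 1) + Suc (og 1))" by (simp add: tE_def)
lemma ev_T1: "peval og T1 [k] = (case k of 0 \<Rightarrow> code tE | Suc i \<Rightarrow> og i)"
  by (cases k) (simp_all add: T1_def)
lemma ev_T2: "peval og T2 [k] = (case k of 0 \<Rightarrow> code tE | Suc i \<Rightarrow> 1 - og i)"
  by (cases k) (simp_all add: T2_def)

lemma Phi_total: "wf t 1 \<Longrightarrow> f = (\<lambda>a. Some (g a)) \<Longrightarrow> Phi f (code t) = (\<lambda>n. Some (peval g t [n]))"
  using compile_Phi by simp

lemma pjoin_total: "pjoin (\<lambda>k. Some (F k)) (\<lambda>k. Some (G k)) = (\<lambda>q. Some (if even q then F (q div 2) else G (q div 2)))"
  by (simp add: pjoin_def fun_eq_iff)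

lemma app_S: "Bapp0 (\<lambda>k. Some (code q1)) (\<lambda>k. Some n) = (\<lambda>k. Some (Suc n))"
  unfolding Bapp0_def pjoin_total
  by (simp add: Phi_total[OF wf_q1 refl])

lemma app_t1: "Bapp0 (\<lambda>k. Some (peval (chiX X) T1 [k])) (\<lambda>k. Some n) = (\<lambda>k. Some (chiX X n))"
proof -
  have "peval (chiX X) T1 [0] = code tE" by (simp add: ev_T1)
  then show ?thesis unfolding Bapp0_def pjoin_total
    by (simp add: Phi_total[OF wf_tE refl] ev_T1)
qed

lemma app_t2: "Bapp0 (\<lambda>k. Some (peval (chiX X) T2 [k])) (\<lambda>k. Some n) = (\<lambda>k. Some (1 - chiX X n))"
proof -
  have "peval (chiX X) T2 [0] = code tE" by (simp add: ev_T2)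
  then show ?thesis unfolding Bapp0_def pjoin_total
    by (simp add: Phi_total[OF wf_tE refl] ev_T2)
qed


lemma join_char: "y \<in> join_compl X \<longleftrightarrow> (even y \<and> y div 2 \<in> X) \<or> (odd y \<and> y div 2 \<notin> X)"
proof
  assume "y \<in> join_compl X"
  then show "(even y \<and> y div 2 \<in> X) \<or> (odd y \<and> y div 2 \<notin> X)" by (auto simp: join_compl_def)
next
  assume h: "(even y \<and> y div 2 \<in> X) \<or> (odd y \<and> y div 2 \<notin> X)"
  then show "y \<in> join_compl X"
  proof
    assume "even y \<and> y div 2 \<in> X"
    then have "2 * (y div 2) \<in> join_compl X" "2 * (y div 2) = y" using join_even by auto
    then show ?thesis by simp
  next
    assume "odd y \<and> y div 2 \<notin> X"
    then have "2 * (y div 2) + 1 \<in> join_compl X" "2 * (y div 2) + 1 = y" using join_odd by (auto elim: oddE)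
    then show ?thesis by simp
  qed
qed

theorem embed_only_if:
  assumes emb: "pca_embedding (Bcarrier X) Bapp (Gcarrier Y) Gapp f"
  shows "le_e (join_compl X) Y"
proof -
  have inB: "f ` Bcarrier X \<subseteq> Gcarrier Y" and inj: "inj_on f (Bcarrier X)"
    and app0: "\<And>a b c. a \<in> Bcarrier X \<Longrightarrow> b \<in> Bcarrier X \<Longrightarrow> Bapp a b = Some c \<Longrightarrow> Gapp (f a) (f b) = Some (f c)"
    using emb unfolding pca_embedding_def by blast+
  have app: "gapp (f a) (f b) = f (Bapp0 a b)" if "a \<in> Bcarrier X" "b \<in> Bcarrier X" for a b
    using app0[OF that Bapp_eq] by (simp add: Gapp_def)
  define cn where "cn n = (\<lambda>k::nat. Some (n::nat))" for n
  define Sl where "Sl = (\<lambda>k::nat. Some (code q1))"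
  define t1 where "t1 = (\<lambda>k. Some (peval (chiX X) T1 [k]))"
  define t2 where "t2 = (\<lambda>k. Some (peval (chiX X) T2 [k]))"
  define Tt where "Tt = (\<lambda>k::nat. Some (1::nat))"
  define Ff where "Ff = (\<lambda>k::nat. Some (0::nat))"
  have B: "cn n \<in> Bcarrier X" "Sl \<in> Bcarrier X" "t1 \<in> Bcarrier X" "t2 \<in> Bcarrier X" "Tt \<in> Bcarrier X" "Ff \<in> Bcarrier X" for n
    unfolding cn_def Sl_def t1_def t2_def Tt_def Ff_def
    by (auto intro: Bcarrier_prc prc_const Bcarrier_tm wf_T1 wf_T2)
  have eYf: "eY Y (f a)" if "a \<in> Bcarrier X" for a using inB that Gcarrier_eY by blast
  obtain Z0 where Z0: "sig (\<lambda>x. x \<in> Z0)" "f (cn 0) = gapp Z0 Y" using eYf[OF B(1)] unfolding eY_def by blast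
  obtain ZS where ZS: "sig (\<lambda>x. x \<in> ZS)" "f Sl = gapp ZS Y" using eYf[OF B(2)] unfolding eY_def by blast
  obtain Z1 where Z1: "sig (\<lambda>x. x \<in> Z1)" "f t1 = gapp Z1 Y" using eYf[OF B(3)] unfolding eY_def by blast
  obtain Z2 where Z2: "sig (\<lambda>x. x \<in> Z2)" "f t2 = gapp Z2 Y" using eYf[OF B(4)] unfolding eY_def by blast
  define A where "A = (\<lambda>n. rec_nat (gapp Z0 Y) (\<lambda>_ B. gapp (gapp ZS Y) B) n)"
  have A: "A n = f (cn n)" for n
  proof (induction n)
    case 0 then show ?case using Z0 by (simp add: A_def)
  next
    case (Suc n)
    have "A (Suc n) = gapp (f Sl) (f (cn n))" using Suc ZS(2) by (simp add: A_def)
    also have "\<dots> = f (cn (Suc n))" using app[OF B(2) B(1)] app_S by (simp add: Sl_def cn_def)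
    finally show ?case .
  qed
  have a1: "gapp (f t1) (A n) = (if n \<in> X then f Tt else f Ff)" for n
    using app[OF B(3) B(1)] app_t1[of X n] A by (simp add: t1_def cn_def Tt_def Ff_def chiX_def)
  have a2: "gapp (f t2) (A n) = (if n \<in> X then f Ff else f Tt)" for n
    using app[OF B(4) B(1)] app_t2[of X n] A by (simp add: t2_def cn_def Tt_def Ff_def chiX_def)
  have "Tt \<noteq> Ff" by (simp add: Tt_def Ff_def fun_eq_iff)
  then have "f Tt \<noteq> f Ff" using inj B(5,6) by (meson inj_on_eq_iff)
  then obtain m where m: "(m \<in> f Tt \<and> m \<notin> f Ff) \<or> (m \<in> f Ff \<and> m \<notin> f Tt)" by blast
  then show ?thesis
  proof
    assume m: "m \<in> f Tt \<and> m \<notin> f Ff"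
    have "join_compl X = {y. (even y \<and> m \<in> gapp (gapp Z1 Y) (A (y div 2))) \<or> (odd y \<and> m \<in> gapp (gapp Z2 Y) (A (y div 2)))}"
      unfolding Z1(2)[symmetric] Z2(2)[symmetric] a1 a2 using m by (auto simp: join_char)
    moreover have "eY Y {y. (even y \<and> m \<in> gapp (gapp Z1 Y) (A (y div 2))) \<or> (odd y \<and> m \<in> gapp (gapp Z2 Y) (A (y div 2)))}"
      unfolding A_def by (rule fam_eY[OF Z0(1) ZS(1) Z1(1) Z2(1)])
    ultimately show ?thesis using le_e_of_eY by simp
  next
    assume m: "m \<in> f Ff \<and> m \<notin> f Tt"
    have "join_compl X = {y. (even y \<and> m \<in> gapp (gapp Z2 Y) (A (y div 2))) \<or> (odd y \<and> m \<in> gapp (gapp Z1 Y) (A (y div 2)))}"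
      unfolding Z1(2)[symmetric] Z2(2)[symmetric] a1 a2 using m by (auto simp: join_char)
    moreover have "eY Y {y. (even y \<and> m \<in> gapp (gapp Z2 Y) (A (y div 2))) \<or> (odd y \<and> m \<in> gapp (gapp Z1 Y) (A (y div 2)))}"
      unfolding A_def by (rule fam_eY[OF Z0(1) ZS(1) Z2(1) Z1(1)])
    ultimately show ?thesis using le_e_of_eY by simp
  qed
qed

theorem theorem7p6:
  fixes X Y :: "nat set"
  shows "(\<exists>f. pca_embedding (Bcarrier X) Bapp (Gcarrier Y) Gapp f) \<longleftrightarrow> le_e (join_compl X) Y"
  using embed_only_if embed_if by blast


end
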